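(* Let $\mathcal S=\{s_1,\dots,s_n,(p_1,l_1),\dots,(p_m,l_m)\}$ be a configuration and let $J\subseteq J_{\mathcal S}$ be a linear subspace such that (1) $\mathcal Z(J)=\{s_1,\dots,s_n,p_1,\dots,p_m\}$; (2) for every $i$, the linear space $\{\nabla q(s_i): q\in J\}\subseteq\mathbb R^3$ has dimension $2$ (i.e. $G_J(s_i)$ is a projective line); (3) for every $j$, there is $q\in J$ with $\nabla q(p_j)\neq 0$; (4) for every $j$, $\mathcal Z(E_J(p_j))\cap l_j=\{p_j\}$, where $E_J(p)=\{q\in J:\operatorname{ord}_p(q)\ge2\}$. Then $\operatorname{span}(F_{\mathcal S})=I_{\mathcal S}$, and for any basis $q_1,\dots,q_k$ of $J$ the form $q_1^2+\dots+q_k^2$ is an inner form of $F_{\mathcal S}$.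
   Context: Notation. $H_k\subseteq\mathbb R[x,y,z]$ is the real vector space of ternary forms of degree $k$. For $I\subseteq H_k$, $\mathcal Z(I)=\{a\in\mathbb P^2(\mathbb R): f(a)=0\ \forall f\in I\}$. $P_{3,4}=\{f\in H_4: f\ge0\text{ on }\mathbb P^2(\mathbb R)\}$. A face of $P_{3,4}$ is a convex subcone $F$ such that $a,b\in P_{3,4}$, $a+b\in F$ imply $a,b\in F$. For $f\in P_{3,4}$, $F_f=\{g\in P_{3,4}: f-\epsilon g\in P_{3,4}$ for some $\epsilon>0\}$; $f$ is an inner form of the face $F$ if $F_f=F$. $J_F=\{q\in H_2:q^2\in F\}$. For $p\in\mathbb P^2(\mathbb R)$ and $q$ a form, $\operatorname{ord}_p(q)$ is its order of vanishing at $p$ (least degree of a nonzero homogeneous component in affine coordinates centered at $p$). Local notation. For $p\in\mathbb P^2(\mathbb R)$, affine coordinates centered at $p$ are obtained by an invertible real linear change of coordinates sending $p$ to $(0:0:1)$ and setting $z=1$; $f\in H_4$ becomes $f(x,y)=\sum a_{ij}x^iy^j=f_0+\dots+f_4$. For $\operatorname{ord}_pf\ge2$ and a real line $l\ni p$ with coordinates chosen so $l=\{y=0\}$, $\tilde f(x,y)=f(x,xy)/x^2$. Sets. $F_s=\{f\in P_{3,4}: f(s)=0\}$, $I_s=\{f\in H_4:\operatorname{ord}_sf\ge2\}$; $F_{(p,l)}=\{f\in P_{3,4}: f(p)=0,\ \tilde f(0,0)=0\}$ and $I_{(p,l)}=\{f\in H_4: a_{00}=a_{10}=a_{01}=a_{20}=a_{11}=a_{30}=0\}$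 (coordinates centered at $p$, $l=\{y=0\}$). A configuration is $\mathcal S=\{s_1,\dots,s_n,(p_1,l_1),\dots,(p_m,l_m)\}$ with $s_1,\dots,s_n,p_1,\dots,p_m\in\mathbb P^2(\mathbb R)$ pairwise distinct and $l_j$ real lines with $p_j\in l_j$; $F_{\mathcal S}=\bigcap_iF_{s_i}\cap\bigcap_jF_{(p_j,l_j)}$, $I_{\mathcal S}=\bigcap_iI_{s_i}\cap\bigcap_jI_{(p_j,l_j)}$, $J_{\mathcal S}=J_{F_{\mathcal S}}$. *)

theory Defs
  imports "HOL-Analysis.Analysis"
begin

(* Points of P^2(R) are represented by nonzero vectors of R^3, up to nonzero scaling.  A real line l is represented
   by a nonzero normal vector nv, l = {a. nv \<bullet> a = 0}. *)

definition proj_eq :: "real^3 \<Rightarrow> real^3 \<Rightarrow> bool" where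
  "proj_eq a b \<longleftrightarrow> (\<exists>t. t \<noteq> 0 \<and> a = t *\<^sub>R b)"

definition monoms :: "nat \<Rightarrow> (nat \<Rightarrow> nat \<Rightarrow> real) \<Rightarrow> real^3 \<Rightarrow> real" where
  "monoms k c v = (\<Sum>i\<le>k. \<Sum>j\<le>k - i. c i j * (v$1)^i * (v$2)^j * (v$3)^(k - i - j))"

definition H :: "nat \<Rightarrow> (real^3 \<Rightarrow> real) set" where
  "H k = {f. \<exists>c. f = monoms k c}"

definition fsubspace :: "(real^3 \<Rightarrow> real) set \<Rightarrow> bool" where
  "fsubspace S \<longleftrightarrow> (\<lambda>v. 0) \<in> S \<and> (\<forall>f\<in>S. \<forall>g\<in>S. (\<lambda>v. f v + g v) \<in> S)
      \<and> (\<forall>f\<in>S. \<forall>t::real. (\<lambda>v. t * f v) \<in> S)"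

definition fspan :: "(real^3 \<Rightarrow> real) set \<Rightarrow> (real^3 \<Rightarrow> real) set" where
  "fspan S = {g. \<exists>k (c::nat \<Rightarrow> real) gs. (\<forall>i<k. gs i \<in> S) \<and> g = (\<lambda>v. \<Sum>i<k. c i * gs i v)}"

definition fbasis :: "(real^3 \<Rightarrow> real) set \<Rightarrow> nat \<Rightarrow> (nat \<Rightarrow> real^3 \<Rightarrow> real) \<Rightarrow> bool" where
  "fbasis S k qs \<longleftrightarrow> (\<forall>i<k. qs i \<in> S)
     \<and> (\<forall>c. (\<forall>v. (\<Sum>i<k. c i * qs i v) = 0) \<longrightarrow> (\<forall>i<k. c i = 0))
     \<and> S = {g. \<exists>c. g = (\<lambda>v. \<Sum>i<k. c i * qs i v)}"

definition Zset :: "(real^3 \<Rightarrow> real) set \<Rightarrow> (real^3) set" where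
  "Zset I = {a. a \<noteq> 0 \<and> (\<forall>f\<in>I. f a = 0)}"

definition P34 :: "(real^3 \<Rightarrow> real) set" where
  "P34 = {f \<in> H 4. \<forall>v. f v \<ge> 0}"

definition Fof :: "(real^3 \<Rightarrow> real) \<Rightarrow> (real^3 \<Rightarrow> real) set" where
  "Fof f = {g \<in> P34. \<exists>\<epsilon>>0. (\<lambda>v. f v - \<epsilon> * g v) \<in> P34}"

definition inner_form :: "(real^3 \<Rightarrow> real) \<Rightarrow> (real^3 \<Rightarrow> real) set \<Rightarrow> bool" where
  "inner_form f F \<longleftrightarrow> f \<in> P34 \<and> Fof f = F"

definition JF :: "(real^3 \<Rightarrow> real) set \<Rightarrow> (real^3 \<Rightarrow> real) set" where
  "JF F = {q \<in> H 2. (\<lambda>v. (q v)^2) \<in> F}"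

definition grad :: "(real^3 \<Rightarrow> real) \<Rightarrow> real^3 \<Rightarrow> real^3" where
  "grad q a = (\<chi> i. frechet_derivative q (at a) (axis i 1))"

(* affine coordinates centered at p: invertible linear change sending p to (0:0:1) *)
definition chart :: "real^3 \<Rightarrow> real^3^3 \<Rightarrow> bool" where
  "chart p A \<longleftrightarrow> invertible A \<and> proj_eq (A *v axis 3 1) p"

(* additionally the line {nv . a = 0} becomes {y = 0} *)
definition chart_line :: "real^3 \<Rightarrow> real^3 \<Rightarrow> real^3^3 \<Rightarrow> bool" where
  "chart_line p nv A \<longleftrightarrow> chart p A \<and> proj_eq (transpose A *v nv) (axis 2 1)"

(* c are the coefficients a_ij of f in the affine coordinates given by A (z = 1) *)
definition local_rep :: "nat \<Rightarrow> (real^3 \<Rightarrow> real) \<Rightarrow> real^3^3 \<Rightarrow> (nat \<Rightarrow> nat \<Rightarrow> real) \<Rightarrow> bool" where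
  "local_rep k f A c \<longleftrightarrow>
     (\<forall>x y. f (A *v vector [x, y, 1]) = (\<Sum>i\<le>k. \<Sum>j\<le>k - i. c i j * x^i * y^j))"

definition ord_ge2 :: "nat \<Rightarrow> real^3 \<Rightarrow> (real^3 \<Rightarrow> real) \<Rightarrow> bool" where
  "ord_ge2 k p f \<longleftrightarrow> (\<exists>A c. chart p A \<and> local_rep k f A c \<and> c 0 0 = 0 \<and> c 1 0 = 0 \<and> c 0 1 = 0)"

definition Fpt :: "real^3 \<Rightarrow> (real^3 \<Rightarrow> real) set" where
  "Fpt s = {f \<in> P34. f s = 0}"

definition Ipt :: "real^3 \<Rightarrow> (real^3 \<Rightarrow> real) set" where
  "Ipt s = {f \<in> H 4. ord_ge2 4 s f}"

definition Fpl :: "real^3 \<Rightarrow> real^3 \<Rightarrow> (real^3 \<Rightarrow> real) set" where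
  "Fpl p nv = {f \<in> P34. f p = 0 \<and> (\<exists>A c. chart_line p nv A \<and> local_rep 4 f A c \<and> c 2 0 = 0)}"

definition Ipl :: "real^3 \<Rightarrow> real^3 \<Rightarrow> (real^3 \<Rightarrow> real) set" where
  "Ipl p nv = {f \<in> H 4. \<exists>A c. chart_line p nv A \<and> local_rep 4 f A c \<and>
      c 0 0 = 0 \<and> c 1 0 = 0 \<and> c 0 1 = 0 \<and> c 2 0 = 0 \<and> c 1 1 = 0 \<and> c 3 0 = 0}"

definition FS :: "nat \<Rightarrow> (nat \<Rightarrow> real^3) \<Rightarrow> nat \<Rightarrow> (nat \<Rightarrow> real^3) \<Rightarrow> (nat \<Rightarrow> real^3) \<Rightarrow> (real^3 \<Rightarrow> real) set" where
  "FS n s m p l = P34 \<inter> (\<Inter>i\<in>{..<n}. Fpt (s i)) \<inter> (\<Inter>j\<in>{..<m}. Fpl (p j) (l j))"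

definition IS :: "nat \<Rightarrow> (nat \<Rightarrow> real^3) \<Rightarrow> nat \<Rightarrow> (nat \<Rightarrow> real^3) \<Rightarrow> (nat \<Rightarrow> real^3) \<Rightarrow> (real^3 \<Rightarrow> real) set" where
  "IS n s m p l = H 4 \<inter> (\<Inter>i\<in>{..<n}. Ipt (s i)) \<inter> (\<Inter>j\<in>{..<m}. Ipl (p j) (l j))"

definition configuration :: "nat \<Rightarrow> (nat \<Rightarrow> real^3) \<Rightarrow> nat \<Rightarrow> (nat \<Rightarrow> real^3) \<Rightarrow> (nat \<Rightarrow> real^3) \<Rightarrow> bool" where
  "configuration n s m p l \<longleftrightarrow>
     (\<forall>i<n. s i \<noteq> 0) \<and> (\<forall>j<m. p j \<noteq> 0 \<and> l j \<noteq> 0 \<and> l j \<bullet> p j = 0)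
     \<and> (\<forall>i<n. \<forall>i'<n. i \<noteq> i' \<longrightarrow> \<not> proj_eq (s i) (s i'))
     \<and> (\<forall>j<m. \<forall>j'<m. j \<noteq> j' \<longrightarrow> \<not> proj_eq (p j) (p j'))
     \<and> (\<forall>i<n. \<forall>j<m. \<not> proj_eq (s i) (p j))"

definition EJ :: "(real^3 \<Rightarrow> real) set \<Rightarrow> real^3 \<Rightarrow> (real^3 \<Rightarrow> real) set" where
  "EJ J p = {q \<in> J. ord_ge2 2 p q}"

end

theory Submission
  imports Defs "HOL-Computational_Algebra.Polynomial"
begin

lemma H_iff: "f \<in> H k \<longleftrightarrow> (\<exists>c. f = monoms k c)" by (simp add: H_def)

lemma dsum_delta: "i + j \<le> (k::nat) \<Longrightarrow> (\<Sum>a\<le>k. \<Sum>b\<le>k - a. (if a = i \<and> b = j then T a b else (0::real))) = T i j"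
proof -
  assume a: "i + j \<le> k"
  have "(\<Sum>a\<le>k. \<Sum>b\<le>k - a. (if a = i \<and> b = j then T a b else (0::real))) = (\<Sum>a\<le>k. if a = i then (\<Sum>b\<le>k - a. if b = j then T a b else 0) else 0)"
    by (intro sum.cong refl) auto
  also have "\<dots> = (\<Sum>a\<le>k. if a = i then T i j else 0)"
  proof (intro sum.cong refl)
    fix x assume "x \<in> {..k}"
    have "j \<le> k - i" using a by arith
    thus "(if x = i then \<Sum>b\<le>k - x. if b = j then T x b else 0 else 0) = (if x = i then T i j else 0)"
      by simp
  qed
  also have "\<dots> = T i j" using a by (simp add: sum.delta)
  finally show ?thesis .
qed

lemma H_mono: "i + j \<le> k \<Longrightarrow> (\<lambda>v::real^3. v$1^i * v$2^j * v$3^(k-i-j)) \<in> H k"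
proof -
  assume a: "i + j \<le> k"
  define c where "c = (\<lambda>a b. if a = i \<and> b = j then (1::real) else 0)"
  have "monoms k c v = v$1^i * v$2^j * v$3^(k-i-j)" for v
  proof -
    have "monoms k c v = (\<Sum>a\<le>k. \<Sum>b\<le>k - a. (if a = i \<and> b = j then v$1^a * v$2^b * v$3^(k-a-b) else 0))"
      unfolding monoms_def c_def by (intro sum.cong refl) auto
    also have "\<dots> = v$1^i * v$2^j * v$3^(k-i-j)" using a by (rule dsum_delta)
    finally show ?thesis .
  qed
  thus ?thesis unfolding H_def by (intro CollectI exI[of _ c]) auto
qed

lemma H_zero: "(\<lambda>v. 0) \<in> H k"
  unfolding H_def monoms_def by (intro CollectI exI[of _ "\<lambda>a b. 0"]) auto

lemma H_add: assumes "f \<in> H k" "g \<in> H k" shows "(\<lambda>v. f v + g v) \<in> H k"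
proof -
  obtain c d where "f = monoms k c" "g = monoms k d" using assms by (auto simp: H_def)
  thus ?thesis unfolding H_def monoms_def
    by (auto intro!: exI[of _ "\<lambda>a b. c a b + d a b"] simp: sum.distrib algebra_simps)
qed

lemma H_scale: assumes "f \<in> H k" shows "(\<lambda>v. t * f v) \<in> H k"
proof -
  obtain c where "f = monoms k c" using assms by (auto simp: H_def)
  thus ?thesis unfolding H_def monoms_def
    by (auto intro!: exI[of _ "\<lambda>a b. t * c a b"] simp: sum_distrib_left algebra_simps)
qed

lemma H_sum: "finite A \<Longrightarrow> (\<And>a. a \<in> A \<Longrightarrow> F a \<in> H k) \<Longrightarrow> (\<lambda>v. \<Sum>a\<in>A. F a v) \<in> H k"
proof (induction A rule: finite_induct)
  case empty thus ?case using H_zero by simp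
next
  case (insert x A) thus ?case using H_add[of "F x" k "\<lambda>v. \<Sum>a\<in>A. F a v"] by simp
qed

lemma H_monoms_sum: "f \<in> H k \<Longrightarrow> f = (\<lambda>v. \<Sum>i\<le>k. \<Sum>j\<le>k-i. c' i j * v$1^i * v$2^j * v$3^(k-i-j)) \<Longrightarrow> True" by simp

lemma H_cmono: "i + j \<le> k \<Longrightarrow> (\<lambda>v::real^3. t * v$1^i * v$2^j * v$3^(k-i-j)) \<in> H k"
  using H_scale[OF H_mono, of i j k t] by (simp add: mult.assoc)

lemma monoms_in_H: "monoms k c \<in> H k" unfolding H_def by auto

lemma H_mult: assumes "f \<in> H a" "g \<in> H b" shows "(\<lambda>v. f v * g v) \<in> H (a+b)"
proof -
  obtain c d where f: "f = monoms a c" and g: "g = monoms b d" using assms by (auto simp: H_def)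
  have eq: "(\<lambda>v. f v * g v) = (\<lambda>v. \<Sum>i\<le>a. \<Sum>j\<le>a-i. \<Sum>i'\<le>b. \<Sum>j'\<le>b-i'.
     (c i j * d i' j') * v$1^(i+i') * v$2^(j+j') * v$3^((a+b)-(i+i')-(j+j')))"
  proof
    fix v :: "real^3"
    have "f v * g v = (\<Sum>i\<le>a. \<Sum>j\<le>a-i. \<Sum>i'\<le>b. \<Sum>j'\<le>b-i'.
      (c i j * v$1^i * v$2^j * v$3^(a-i-j)) * (d i' j' * v$1^i' * v$2^j' * v$3^(b-i'-j')))"
      unfolding f g monoms_def sum_distrib_right unfolding sum_distrib_left ..
    also have "\<dots> = (\<Sum>i\<le>a. \<Sum>j\<le>a-i. \<Sum>i'\<le>b. \<Sum>j'\<le>b-i'.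
     (c i j * d i' j') * v$1^(i+i') * v$2^(j+j') * v$3^((a+b)-(i+i')-(j+j')))"
    proof (intro sum.cong refl)
      fix i j i' j' assume "i \<in> {..a}" "j \<in> {..a-i}" "i' \<in> {..b}" "j' \<in> {..b-i'}"
      hence e: "(a+b)-(i+i')-(j+j') = (a-i-j) + (b-i'-j')" by auto
      show "(c i j * v$1^i * v$2^j * v$3^(a-i-j)) * (d i' j' * v$1^i' * v$2^j' * v$3^(b-i'-j')) =
         (c i j * d i' j') * v$1^(i+i') * v$2^(j+j') * v$3^((a+b)-(i+i')-(j+j'))"
        unfolding e by (simp add: power_add algebra_simps)
    qed
    finally show "f v * g v = \<dots>" .
  qed
  show ?thesis unfolding eq
    by (intro H_sum H_cmono) auto
qed

lemma H_hom: assumes "f \<in> H k" shows "f (t *\<^sub>R v) = t^k * f v"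
proof -
  obtain c where f: "f = monoms k c" using assms by (auto simp: H_def)
  have "f (t *\<^sub>R v) = (\<Sum>i\<le>k. \<Sum>j\<le>k-i. t^k * (c i j * v$1^i * v$2^j * v$3^(k-i-j)))"
    unfolding f monoms_def
  proof (intro sum.cong refl)
    fix i j assume "i \<in> {..k}" "j \<in> {..k-i}"
    hence e: "k = i + j + (k-i-j)" by auto
    show "c i j * (t *\<^sub>R v)$1^i * (t *\<^sub>R v)$2^j * (t *\<^sub>R v)$3^(k-i-j) = t^k * (c i j * v$1^i * v$2^j * v$3^(k-i-j))"
      by (subst (2) e) (simp add: power_add power_mult_distrib algebra_simps)
  qed
  also have "\<dots> = t^k * f v" unfolding f monoms_def by (simp add: sum_distrib_left)
  finally show ?thesis .
qed

lemma H_cont: assumes "f \<in> H k" shows "continuous_on UNIV f"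
proof -
  obtain c where f: "f = monoms k c" using assms by (auto simp: H_def)
  show ?thesis unfolding f monoms_def by (intro continuous_intros)
qed

lemma monoms2_expand: "monoms 2 c v = c 0 0 * v$3^2 + c 0 1 * v$2 * v$3 + c 0 2 * v$2^2
   + c 1 0 * v$1 * v$3 + c 1 1 * v$1 * v$2 + c 2 0 * v$1^2"
  by (simp add: monoms_def numeral_2_eq_2 atMost_Suc algebra_simps)

definition P2 :: "nat \<Rightarrow> (real \<Rightarrow> real \<Rightarrow> real) set" where
  "P2 k = {\<phi>. \<exists>c. \<forall>x y. \<phi> x y = (\<Sum>i\<le>k. \<Sum>j\<le>k - i. c i j * x^i * y^j)}"

lemma P2_mono: "i + j \<le> k \<Longrightarrow> (\<lambda>x y. x^i * y^j) \<in> P2 k"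
proof -
  assume a: "i + j \<le> k"
  define c where "c = (\<lambda>a b. if a = i \<and> b = j then (1::real) else 0)"
  have "(\<Sum>a\<le>k. \<Sum>b\<le>k - a. c a b * x^a * y^b) = x^i * y^j" for x y
  proof -
    have "(\<Sum>a\<le>k. \<Sum>b\<le>k - a. c a b * x^a * y^b) = (\<Sum>a\<le>k. \<Sum>b\<le>k - a. (if a = i \<and> b = j then x^a * y^b else 0))"
      unfolding c_def by (intro sum.cong refl) auto
    also have "\<dots> = x^i * y^j" using a by (rule dsum_delta)
    finally show ?thesis .
  qed
  thus ?thesis unfolding P2_def by (intro CollectI exI[of _ c]) auto
qed

lemma P2_zero: "(\<lambda>x y. 0) \<in> P2 k"
  unfolding P2_def by (intro CollectI exI[of _ "\<lambda>a b. 0"]) auto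

lemma P2_add: assumes "f \<in> P2 k" "g \<in> P2 k" shows "(\<lambda>x y. f x y + g x y) \<in> P2 k"
proof -
  obtain c d where "\<forall>x y. f x y = (\<Sum>i\<le>k. \<Sum>j\<le>k - i. c i j * x^i * y^j)" "\<forall>x y. g x y = (\<Sum>i\<le>k. \<Sum>j\<le>k - i. d i j * x^i * y^j)"
    using assms unfolding P2_def by blast
  thus ?thesis unfolding P2_def
    by (auto intro!: exI[of _ "\<lambda>a b. c a b + d a b"] simp: sum.distrib algebra_simps)
qed

lemma P2_scale: assumes "f \<in> P2 k" shows "(\<lambda>x y. t * f x y) \<in> P2 k"
proof -
  obtain c where "\<forall>x y. f x y = (\<Sum>i\<le>k. \<Sum>j\<le>k - i. c i j * x^i * y^j)"
    using assms unfolding P2_def by blast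
  thus ?thesis unfolding P2_def
    by (auto intro!: exI[of _ "\<lambda>a b. t * c a b"] simp: sum_distrib_left algebra_simps)
qed

lemma P2_sum: "finite A \<Longrightarrow> (\<And>a. a \<in> A \<Longrightarrow> F a \<in> P2 k) \<Longrightarrow> (\<lambda>x y. \<Sum>a\<in>A. F a x y) \<in> P2 k"
proof (induction A rule: finite_induct)
  case empty thus ?case using P2_zero by simp
next
  case (insert x A) thus ?case using P2_add[of "F x" k "\<lambda>x y. \<Sum>a\<in>A. F a x y"] by simp
qed

lemma P2_cmono: "i + j \<le> k \<Longrightarrow> (\<lambda>x y. t * x^i * y^j) \<in> P2 k"
  using P2_scale[OF P2_mono, of i j k t] by (simp add: mult.assoc)

lemma P2_le: assumes "f \<in> P2 a" "a \<le> b" shows "f \<in> P2 b"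
proof -
  obtain c where c: "\<And>x y. f x y = (\<Sum>i\<le>a. \<Sum>j\<le>a - i. c i j * x^i * y^j)" using assms by (auto simp: P2_def)
  have "(\<lambda>x y. \<Sum>i\<le>a. \<Sum>j\<le>a - i. c i j * x^i * y^j) \<in> P2 b"
    using assms(2) by (intro P2_sum P2_cmono) auto
  moreover have "f = (\<lambda>x y. \<Sum>i\<le>a. \<Sum>j\<le>a - i. c i j * x^i * y^j)" using c by auto
  ultimately show ?thesis by simp
qed

lemma P2_mult: assumes "f \<in> P2 a" "g \<in> P2 b" shows "(\<lambda>x y. f x y * g x y) \<in> P2 (a+b)"
proof -
  obtain c where c: "\<And>x y. f x y = (\<Sum>i\<le>a. \<Sum>j\<le>a - i. c i j * x^i * y^j)" using assms by (auto simp: P2_def)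
  obtain d where d: "\<And>x y. g x y = (\<Sum>i\<le>b. \<Sum>j\<le>b - i. d i j * x^i * y^j)" using assms by (auto simp: P2_def)
  have eq: "(\<lambda>x y. f x y * g x y) = (\<lambda>x y. \<Sum>i\<le>a. \<Sum>j\<le>a-i. \<Sum>i'\<le>b. \<Sum>j'\<le>b-i'.
     (c i j * d i' j') * x^(i+i') * y^(j+j'))"
  proof (intro ext)
    fix x y
    have "f x y * g x y = (\<Sum>i\<le>a. \<Sum>j\<le>a-i. \<Sum>i'\<le>b. \<Sum>j'\<le>b-i'.
     (c i j * x^i * y^j) * (d i' j' * x^i' * y^j'))"
      unfolding c d sum_distrib_right unfolding sum_distrib_left ..
    also have "\<dots> = (\<Sum>i\<le>a. \<Sum>j\<le>a-i. \<Sum>i'\<le>b. \<Sum>j'\<le>b-i'.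
     (c i j * d i' j') * x^(i+i') * y^(j+j'))"
      by (intro sum.cong refl) (simp add: power_add algebra_simps)
    finally show "f x y * g x y = \<dots>" .
  qed
  show ?thesis unfolding eq by (intro P2_sum P2_cmono) auto
qed

lemma P2_const: "(\<lambda>x y. t) \<in> P2 k"
  using P2_cmono[of 0 0 k t] by simp

lemma P2_lin: "(\<lambda>x y. a * x + b * y + c) \<in> P2 1"
proof -
  have h1: "(\<lambda>x y. a * x^1 * y^0) \<in> P2 1" by (rule P2_cmono) simp
  have h2: "(\<lambda>x y. b * x^0 * y^1) \<in> P2 1" by (rule P2_cmono) simp
  have "(\<lambda>x y. a * x^1 * y^0 + b * x^0 * y^1) \<in> P2 1"
    by (rule P2_add[OF h1 h2])
  hence "(\<lambda>x y. (a * x^1 * y^0 + b * x^0 * y^1) + c) \<in> P2 1" by (rule P2_add[OF _ P2_const])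
  thus ?thesis by simp
qed

lemma P2_pow: "f \<in> P2 a \<Longrightarrow> (\<lambda>x y. f x y ^ n) \<in> P2 (a * n)"
proof (induction n)
  case 0 thus ?case using P2_const[of 1 0] by simp
next
  case (Suc n)
  hence "(\<lambda>x y. f x y * f x y ^ n) \<in> P2 (a + a * n)" using P2_mult by blast
  thus ?case by (simp add: algebra_simps)
qed

lemma vec3_lin: "((A::real^3^3) *v vector [x, y, 1]) $ r = A$r$1 * x + A$r$2 * y + A$r$3"
  by (simp add: matrix_vector_mult_def sum_3)

lemma H_chart_P2: fixes A :: "real^3^3" assumes "f \<in> H k" shows "(\<lambda>x y. f (A *v vector [x, y, 1])) \<in> P2 k"
proof -
  obtain c where f: "f = monoms k c" using assms by (auto simp: H_def)
  let ?L = "\<lambda>r x y. A$r$1 * x + A$r$2 * y + A$r$3"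
  have eq: "(\<lambda>x y. f (A *v vector [x, y, 1])) = (\<lambda>x y. \<Sum>i\<le>k. \<Sum>j\<le>k-i. c i j * ((?L 1 x y ^ i * ?L 2 x y ^ j) * ?L 3 x y ^ (k-i-j)))"
    unfolding f monoms_def vec3_lin by (simp add: algebra_simps)
  show ?thesis unfolding eq
  proof (intro P2_sum P2_scale)
    fix i j assume "i \<in> {..k}" "j \<in> {..k-i}"
    hence kk: "k = (1*i + 1*j) + 1*(k-i-j)" by auto
    have "(\<lambda>x y. (?L 1 x y ^ i * ?L 2 x y ^ j) * ?L 3 x y ^ (k-i-j)) \<in> P2 ((1*i + 1*j) + 1*(k-i-j))"
      by (intro P2_mult P2_pow P2_lin)
    thus "(\<lambda>x y. (?L 1 x y ^ i * ?L 2 x y ^ j) * ?L 3 x y ^ (k-i-j)) \<in> P2 k" using kk by simp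
  qed auto
qed

lemma local_rep_exists: "f \<in> H k \<Longrightarrow> \<exists>c. local_rep k f A c"
  using H_chart_P2[of f k A] unfolding P2_def local_rep_def by auto

lemma matvec_decomp: "(A::real^3^3) *v u = u$1 *\<^sub>R (A *v axis 1 1) + u$2 *\<^sub>R (A *v axis 2 1) + u$3 *\<^sub>R (A *v axis 3 1)"
  by (simp add: vec_eq_iff forall_3 matrix_vector_mult_def sum_3 axis_def algebra_simps)

lemma chart_decomp: "(A::real^3^3) *v vector [x, y, 1] = x *\<^sub>R (A *v axis 1 1) + y *\<^sub>R (A *v axis 2 1) + A *v axis 3 1"
  by (subst matvec_decomp) simp

lemma inner3: "(a::real^3) \<bullet> b = a$1 * b$1 + a$2 * b$2 + a$3 * b$3"
  by (simp add: inner_vec_def sum_3)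

definition gq :: "(nat \<Rightarrow> nat \<Rightarrow> real) \<Rightarrow> real^3 \<Rightarrow> real^3" where
  "gq c a = vector [2 * c 2 0 * a$1 + c 1 1 * a$2 + c 1 0 * a$3,
                    c 1 1 * a$1 + 2 * c 0 2 * a$2 + c 0 1 * a$3,
                    c 1 0 * a$1 + c 0 1 * a$2 + 2 * c 0 0 * a$3]"

lemma vec_nth_has_derivative: "((\<lambda>v::real^3. v$i) has_derivative (\<lambda>w. w$i)) F"
  by (rule bounded_linear_imp_has_derivative[OF bounded_linear_vec_nth])

lemma monoms2_deriv: "(monoms 2 c has_derivative (\<lambda>w. gq c a \<bullet> w)) (at a)"
proof -
  have e: "monoms 2 c = (\<lambda>v. c 0 0 * v$3^2 + c 0 1 * v$2 * v$3 + c 0 2 * v$2^2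
   + c 1 0 * v$1 * v$3 + c 1 1 * v$1 * v$2 + c 2 0 * v$1^2)" by (intro ext) (rule monoms2_expand)
  show ?thesis unfolding e
    apply (rule derivative_eq_intros vec_nth_has_derivative refl | simp)+
    apply (simp add: gq_def inner3 power2_eq_square algebra_simps)
    done
qed

lemma H2_grad_eq: assumes "q \<in> H 2" "q = monoms 2 c" shows "grad q a = gq c a"
proof -
  have "frechet_derivative q (at a) = (\<lambda>w. gq c a \<bullet> w)"
    unfolding assms(2) by (rule frechet_derivative_at[symmetric], rule monoms2_deriv)
  thus ?thesis unfolding grad_def by (simp add: vec_eq_iff inner_axis)
qed

lemma H2_expand': assumes "q \<in> H 2" shows "q (a + w) = q a + grad q a \<bullet> w + q w"
proof -
  obtain c where c: "q = monoms 2 c" using assms by (auto simp: H_def)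
  show ?thesis unfolding H2_grad_eq[OF assms c] unfolding c monoms2_expand
    by (simp add: gq_def inner3 power2_eq_square algebra_simps)
qed

lemma H2_euler: assumes "q \<in> H 2" shows "grad q a \<bullet> a = 2 * q a"
proof -
  obtain c where c: "q = monoms 2 c" using assms by (auto simp: H_def)
  show ?thesis unfolding H2_grad_eq[OF assms c] unfolding c monoms2_expand
    by (simp add: gq_def inner3 power2_eq_square algebra_simps)
qed

lemma H2_grad_scale: assumes "q \<in> H 2" shows "grad q (t *\<^sub>R a) = t *\<^sub>R grad q a"
proof -
  obtain c where c: "q = monoms 2 c" using assms by (auto simp: H_def)
  show ?thesis unfolding H2_grad_eq[OF assms c]
    by (simp add: gq_def vec_eq_iff forall_3 algebra_simps)
qed

lemma H2_lin2: assumes "q \<in> H 2" shows "q (x *\<^sub>R u + y *\<^sub>R w) = x^2 * q u + x * y * (grad q u \<bullet> w) + y^2 * q w"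
proof -
  obtain c where c: "q = monoms 2 c" using assms by (auto simp: H_def)
  show ?thesis unfolding H2_grad_eq[OF assms c] unfolding c monoms2_expand
    by (simp add: gq_def inner3 power2_eq_square algebra_simps)
qed

lemma H2_chart: assumes "q \<in> H 2"
  shows "q ((A::real^3^3) *v vector [x, y, 1]) = q (A *v axis 3 1) + x * (grad q (A *v axis 3 1) \<bullet> (A *v axis 1 1))
     + y * (grad q (A *v axis 3 1) \<bullet> (A *v axis 2 1)) + x^2 * q (A *v axis 1 1)
     + x * y * (grad q (A *v axis 1 1) \<bullet> (A *v axis 2 1)) + y^2 * q (A *v axis 2 1)"
proof -
  obtain c where c: "q = monoms 2 c" using assms by (auto simp: H_def)
  show ?thesis unfolding chart_decomp H2_grad_eq[OF assms c] unfolding c monoms2_expand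
    by (simp add: gq_def inner3 power2_eq_square algebra_simps)
qed

lemma poly_coeffs_zero: assumes "\<forall>x::real. (\<Sum>i\<le>N. a i * x^i) = 0" shows "\<forall>i\<le>N. a i = 0"
proof -
  let ?p = "\<Sum>i\<le>N. monom (a i) i"
  have "poly ?p x = (\<Sum>i\<le>N. a i * x^i)" for x by (simp add: poly_sum poly_monom)
  hence "\<forall>x. poly ?p x = 0" using assms by simp
  hence p0: "?p = 0" using poly_all_0_iff_0 by blast
  show ?thesis
  proof (intro allI impI)
    fix i assume "i \<le> N"
    have "coeff ?p i = (\<Sum>j\<le>N. if j = i then a j else 0)" by (simp add: coeff_sum coeff_monom)
    also have "\<dots> = a i" using \<open>i \<le> N\<close> by simp
    finally show "a i = 0" using p0 by simp
  qed
qed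

lemma poly_coeffs_eq: assumes "\<forall>x::real. (\<Sum>i\<le>N. a i * x^i) = (\<Sum>i\<le>N. b i * x^i)" shows "\<forall>i\<le>N. a i = b i"
proof -
  have "\<forall>x::real. (\<Sum>i\<le>N. (a i - b i) * x^i) = 0" using assms by (simp add: algebra_simps sum_subtractf)
  thus ?thesis using poly_coeffs_zero[where N=N and a="\<lambda>i. a i - b i"] by auto
qed

lemma sum4: "(\<Sum>i\<le>(4::nat). a i * x^i) = a 0 + a 1 * x + a 2 * x^2 + a 3 * x^3 + a (4::nat) * (x::real)^4"
  by (simp add: numeral_eq_Suc atMost_Suc)

lemma rep_y0: "(\<Sum>i\<le>k. \<Sum>j\<le>k - i. c i j * x^i * (0::real)^j) = (\<Sum>i\<le>k. c i 0 * x^i)"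
proof (intro sum.cong refl)
  fix i show "(\<Sum>j\<le>k - i. c i j * x^i * (0::real)^j) = c i 0 * x^i"
    by (subst sum.atMost_shift) (simp add: power_0_left)
qed

lemma rep_x0: "(\<Sum>i\<le>k. \<Sum>j\<le>k - i. c i j * (0::real)^i * y^j) = (\<Sum>j\<le>k. c 0 j * y^j)"
  by (subst sum.atMost_shift) (simp add: power_0_left)

lemma rep4_expand: "(\<Sum>i\<le>(4::nat). \<Sum>j\<le>4 - i. c i j * x^i * y^j) =
   c 0 0 + c 0 1 * y + c 0 2 * y^2 + c 0 3 * y^3 + c 0 4 * y^4
 + c 1 0 * x + c 1 1 * x * y + c 1 2 * x * y^2 + c 1 3 * x * y^3
 + c 2 0 * x^2 + c 2 1 * x^2 * y + c 2 2 * x^2 * y^2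
 + c 3 0 * x^3 + c 3 1 * x^3 * y + c (4::nat) (0::nat) * (x::real)^4"
  by (simp add: numeral_eq_Suc atMost_Suc)

lemma rep2_expand: "(\<Sum>i\<le>(2::nat). \<Sum>j\<le>2 - i. c i j * x^i * y^j) =
   c 0 0 + c 0 1 * y + c 0 2 * y^2 + c 1 0 * x + c 1 1 * x * y + c (2::nat) (0::nat) * (x::real)^2"
  by (simp add: numeral_eq_Suc atMost_Suc)

lemma cont_right_nonneg:
  fixes \<phi> :: "real \<Rightarrow> real"
  assumes "isCont \<phi> 0" "\<delta> > 0" "\<And>x. 0 < x \<Longrightarrow> x < \<delta> \<Longrightarrow> \<phi> x \<ge> 0"
  shows "\<phi> 0 \<ge> 0"
proof -
  have "(\<phi> \<longlongrightarrow> \<phi> 0) (at_right 0)"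
    using assms(1) by (simp add: isCont_def filterlim_at_split)
  moreover have "eventually (\<lambda>x. 0 \<le> \<phi> x) (at_right 0)"
    using eventually_at_right_real[OF assms(2)] by (rule eventually_mono) (use assms(3) in auto)
  ultimately show ?thesis by (rule tendsto_lowerbound) simp
qed

lemma cont_left_nonneg:
  fixes \<phi> :: "real \<Rightarrow> real"
  assumes "isCont \<phi> 0" "\<delta> > 0" "\<And>x. -\<delta> < x \<Longrightarrow> x < 0 \<Longrightarrow> \<phi> x \<ge> 0"
  shows "\<phi> 0 \<ge> 0"
proof -
  have "isCont (\<phi> \<circ> uminus) 0"
    by (rule continuous_at_compose) (use assms(1) in \<open>auto intro: continuous_intros\<close>)
  hence "isCont (\<lambda>x. \<phi> (-x)) 0" by (simp add: o_def)
  hence "(\<lambda>x. \<phi> (-x)) 0 \<ge> 0" by (rule cont_right_nonneg[OF _ assms(2)]) (use assms(3) in auto)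
  thus ?thesis by simp
qed

lemma cont_punct_nonneg:
  fixes \<phi> :: "real \<Rightarrow> real"
  assumes "isCont \<phi> 0" "\<delta> > 0" "\<And>x. x \<noteq> 0 \<Longrightarrow> \<bar>x\<bar> < \<delta> \<Longrightarrow> \<phi> x \<ge> 0"
  shows "\<phi> 0 \<ge> 0"
  by (rule cont_right_nonneg[OF assms(1,2)]) (use assms(3) in auto)

lemma x_times_nonneg:
  fixes \<phi> :: "real \<Rightarrow> real"
  assumes "isCont \<phi> 0" "\<delta> > 0" "\<And>x. \<bar>x\<bar> < \<delta> \<Longrightarrow> x * \<phi> x \<ge> 0"
  shows "\<phi> 0 = 0"
proof -
  have "\<phi> 0 \<ge> 0"
  proof (rule cont_right_nonneg[OF assms(1,2)])
    fix x assume "0 < x" "x < \<delta>"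
    with assms(3)[of x] show "\<phi> x \<ge> 0" by (simp add: zero_le_mult_iff)
  qed
  moreover have "(\<lambda>x. - \<phi> x) 0 \<ge> 0"
  proof (rule cont_left_nonneg[OF _ assms(2)])
    show "isCont (\<lambda>x. - \<phi> x) 0" using assms(1) by (intro continuous_intros)
    fix x assume "- \<delta> < x" "x < 0"
    with assms(3)[of x] show "- \<phi> x \<ge> 0" by (simp add: zero_le_mult_iff)
  qed
  ultimately show ?thesis by simp
qed

lemma cont_eq_off_point:
  fixes \<phi> :: "real \<Rightarrow> real"
  assumes "continuous_on UNIV \<phi>" "\<And>x. x \<noteq> x0 \<Longrightarrow> \<phi> x = 0"
  shows "\<phi> x0 = 0"
proof -
  have "(\<phi> \<longlongrightarrow> \<phi> x0) (at x0)" using assms(1) by (simp add: continuous_on_def)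
  moreover have "eventually (\<lambda>x. \<phi> x = 0) (at x0)"
    using assms(2) by (auto simp: eventually_at_topological)
  hence "(\<phi> \<longlongrightarrow> 0) (at x0)" by (rule tendsto_eventually)
  ultimately show ?thesis using tendsto_unique by (metis at_neq_bot)
qed

abbreviation e :: "3 \<Rightarrow> real^3" where "e i \<equiv> axis i 1"

lemma chart_e3: "chart p A \<Longrightarrow> \<exists>t. t \<noteq> 0 \<and> A *v e 3 = t *\<^sub>R p"
  unfolding chart_def proj_eq_def by auto

lemma inv_ex: assumes "invertible (A::real^3^3)" shows "\<exists>Ai. \<forall>v. A *v (Ai *v v) = v \<and> Ai *v (A *v v) = v"
proof -
  obtain B where "A ** B = mat 1" "B ** A = mat 1" using assms unfolding invertible_def by auto
  thus ?thesis by (intro exI[of _ B]) (simp add: matrix_vector_mul_assoc)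
qed

lemma inv_inj: assumes "invertible (A::real^3^3)" "A *v u = 0" shows "u = 0"
  using inv_ex[OF assms(1)] assms(2) by (metis matrix_vector_mult_0_right)

lemma dot_mat: "(nv::real^3) \<bullet> ((A::real^3^3) *v u) = (transpose A *v nv) \<bullet> u"
  by (simp add: inner3 matrix_vector_mult_def sum_3 transpose_def algebra_simps)

lemma chart_line_nv: assumes "chart_line p nv A" shows "\<exists>\<mu>. \<mu> \<noteq> 0 \<and> (\<forall>u. nv \<bullet> (A *v u) = \<mu> * u$2)"
proof -
  obtain t where t: "t \<noteq> 0" "transpose A *v nv = t *\<^sub>R e 2"
    using assms unfolding chart_line_def proj_eq_def by auto
  have "nv \<bullet> (A *v u) = t * u$2" for u
    unfolding dot_mat t by (simp add: inner_commute[of _ u] inner_axis)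
  thus ?thesis using t by auto
qed

lemma vec001: "(A::real^3^3) *v vector [0, 0, 1] = A *v e 3"
  by (simp add: chart_decomp)

lemma E1: assumes f: "f \<in> H 4" and nn: "\<forall>v. f v \<ge> 0" and fp: "f p = 0" and ch: "chart p A"
  and rep: "local_rep 4 f A c"
  shows "c 0 0 = 0 \<and> c 1 0 = 0 \<and> c 0 1 = 0"
proof -
  obtain t where t: "A *v e 3 = t *\<^sub>R p" using chart_e3[OF ch] by auto
  have P: "f (A *v vector [x, y, 1]) = c 0 0 + c 0 1 * y + c 0 2 * y^2 + c 0 3 * y^3 + c 0 4 * y^4
 + c 1 0 * x + c 1 1 * x * y + c 1 2 * x * y^2 + c 1 3 * x * y^3
 + c 2 0 * x^2 + c 2 1 * x^2 * y + c 2 2 * x^2 * y^2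
 + c 3 0 * x^3 + c 3 1 * x^3 * y + c 4 0 * x^4" for x y
    using rep unfolding local_rep_def rep4_expand by simp
  have c00: "c 0 0 = 0" using P[of 0 0] by (simp add: vec001 t H_hom[OF f] fp)
  have "c 1 0 = 0"
  proof -
    have "(\<lambda>x. c 1 0 + c 2 0 * x + c 3 0 * x^2 + c 4 0 * x^3) 0 = 0"
    proof (rule x_times_nonneg[where \<delta>=1])
      show "isCont (\<lambda>x. c 1 0 + c 2 0 * x + c 3 0 * x^2 + c 4 0 * x^3) 0" by (intro continuous_intros)
      fix x :: real
      have "x * (c 1 0 + c 2 0 * x + c 3 0 * x^2 + c 4 0 * x^3) = f (A *v vector [x, 0, 1])"
        using P[of x 0] c00 by (simp add: algebra_simps power2_eq_square power3_eq_cube power4_eq_xxxx)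
      thus "0 \<le> x * (c 1 0 + c 2 0 * x + c 3 0 * x^2 + c 4 0 * x^3)" using nn by simp
    qed simp
    thus ?thesis by simp
  qed
  moreover have "c 0 1 = 0"
  proof -
    have "(\<lambda>y. c 0 1 + c 0 2 * y + c 0 3 * y^2 + c 0 4 * y^3) 0 = 0"
    proof (rule x_times_nonneg[where \<delta>=1])
      show "isCont (\<lambda>y. c 0 1 + c 0 2 * y + c 0 3 * y^2 + c 0 4 * y^3) 0" by (intro continuous_intros)
      fix y :: real
      have "y * (c 0 1 + c 0 2 * y + c 0 3 * y^2 + c 0 4 * y^3) = f (A *v vector [0, y, 1])"
        using P[of 0 y] c00 by (simp add: algebra_simps power2_eq_square power3_eq_cube power4_eq_xxxx)
      thus "0 \<le> y * (c 0 1 + c 0 2 * y + c 0 3 * y^2 + c 0 4 * y^3)" using nn by simp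
    qed simp
    thus ?thesis by simp
  qed
  ultimately show ?thesis using c00 by simp
qed


lemma quad_nonneg_lin0: assumes "\<forall>L::real. b * L + a * L^2 \<ge> 0" shows "b = 0"
proof -
  define K where "K = \<bar>a\<bar> + 1"
  have K: "K > 0" "a - K < 0" unfolding K_def by auto
  have "b * (-b/K) + a * (-b/K)^2 \<ge> 0" using assms by blast
  hence "K^2 * (b * (-b/K) + a * (-b/K)^2) \<ge> 0" by simp
  moreover have "K^2 * (b * (-b/K) + a * (-b/K)^2) = b^2 * (a - K)"
    using K by (simp add: field_simps power2_eq_square)
  ultimately have "b^2 * (a - K) \<ge> 0" by simp
  hence "b^2 \<le> 0" using K(2) by (simp add: mult_le_0_iff zero_le_mult_iff)
  thus ?thesis by simp
qed

lemma rep4_P: assumes "local_rep 4 f A c"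
  shows "f (A *v vector [x, y, 1]) = c 0 0 + c 0 1 * y + c 0 2 * y^2 + c 0 3 * y^3 + c 0 4 * y^4
 + c 1 0 * x + c 1 1 * x * y + c 1 2 * x * y^2 + c 1 3 * x * y^3
 + c 2 0 * x^2 + c 2 1 * x^2 * y + c 2 2 * x^2 * y^2
 + c 3 0 * x^3 + c 3 1 * x^3 * y + c 4 0 * x^4"
  using assms unfolding local_rep_def rep4_expand by simp

lemma chart_line_chart: "chart_line p nv A \<Longrightarrow> chart p A" unfolding chart_line_def by simp

lemma E11: assumes f: "f \<in> H 4" and nn: "\<forall>v. f v \<ge> 0" and rep: "local_rep 4 f A d"
  and z: "d 0 0 = 0" "d 1 0 = 0" "d 0 1 = 0" "d 2 0 = 0" "d 3 0 = 0"
  shows "d 1 1 = 0"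
proof -
  have "\<forall>L. d 1 1 * L + d 0 2 * L^2 \<ge> 0"
  proof
    fix L :: real
    let ?g = "\<lambda>t. d 1 1 * L + d 0 2 * L^2 + t * (d 2 1 * L + d 1 2 * L^2 + d 0 3 * L^3)
       + t^2 * (d 4 0 + d 3 1 * L + d 2 2 * L^2 + d 1 3 * L^3 + d 0 4 * L^4)"
    have "?g 0 \<ge> 0"
    proof (rule cont_punct_nonneg[where \<delta>=1])
      show "isCont ?g 0" by (intro continuous_intros)
      fix t :: real assume t: "t \<noteq> 0"
      have "t^2 * ?g t = f (A *v vector [t, L * t, 1])"
        unfolding rep4_P[OF rep] z by (simp add: algebra_simps power2_eq_square power3_eq_cube power4_eq_xxxx)
      hence "t^2 * ?g t \<ge> 0" using nn by simp
      thus "?g t \<ge> 0" using t by (simp add: zero_le_mult_iff)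
    qed simp
    thus "d 1 1 * L + d 0 2 * L^2 \<ge> 0" by simp
  qed
  thus ?thesis by (rule quad_nonneg_lin0)
qed

lemma Epl_B: assumes f: "f \<in> H 4" and nn: "\<forall>v. f v \<ge> 0" and fp: "f p = 0"
  and chB: "chart_line p nv B" and repB: "local_rep 4 f B c" and c20: "c 2 0 = 0"
  shows "\<forall>x. f (B *v vector [x, 0, 1]) = c 4 0 * x^4"
proof -
  have z: "c 0 0 = 0" "c 1 0 = 0" "c 0 1 = 0" using E1[OF f nn fp chart_line_chart[OF chB] repB] by auto
  have P: "f (B *v vector [x, 0, 1]) = c 3 0 * x^3 + c 4 0 * x^4" for x
    unfolding rep4_P[OF repB] z c20 by simp
  have "(\<lambda>x. c 3 0 + c 4 0 * x) 0 = 0"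
  proof (rule x_times_nonneg[where \<delta>=1])
    show "isCont (\<lambda>x. c 3 0 + c 4 0 * x) 0" by (intro continuous_intros)
    fix x :: real
    show "0 \<le> x * (c 3 0 + c 4 0 * x)"
    proof (cases "x = 0")
      case False
      have "x^2 * (x * (c 3 0 + c 4 0 * x)) = f (B *v vector [x, 0, 1])"
        unfolding P by (simp add: algebra_simps power2_eq_square power3_eq_cube power4_eq_xxxx)
      hence "x^2 * (x * (c 3 0 + c 4 0 * x)) \<ge> 0" using nn by simp
      thus ?thesis using False by (simp add: zero_le_mult_iff)
    qed simp
  qed simp
  thus ?thesis using P by simp
qed


lemma line_transfer: assumes f: "f \<in> H 4"
  and chB: "chart_line p nv B" and chA: "chart_line p nv A"
  and PB: "\<forall>x. f (B *v vector [x, 0, 1]) = \<kappa> * x^4"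
  shows "\<exists>\<kappa>'. \<forall>x. f (A *v vector [x, 0, 1]) = \<kappa>' * x^4"
proof -
  obtain Bi where Bi: "\<And>v. B *v (Bi *v v) = v" "\<And>v. Bi *v (B *v v) = v"
    using inv_ex chB unfolding chart_line_def chart_def by blast
  obtain tA where tA: "tA \<noteq> 0" "A *v e 3 = tA *\<^sub>R p" using chart_e3[OF chart_line_chart[OF chA]] by auto
  obtain tB where tB: "tB \<noteq> 0" "B *v e 3 = tB *\<^sub>R p" using chart_e3[OF chart_line_chart[OF chB]] by auto
  obtain muA where muA: "\<And>u. nv \<bullet> (A *v u) = muA * u$2" using chart_line_nv[OF chA] by auto
  obtain muB where muB: "muB \<noteq> 0" "\<And>u. nv \<bullet> (B *v u) = muB * u$2" using chart_line_nv[OF chB] by auto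
  define lam where "lam = tA / tB"
  have lam: "lam \<noteq> 0" using tA tB unfolding lam_def by auto
  have Bie3: "Bi *v (A *v e 3) = lam *\<^sub>R e 3"
  proof -
    have "B *v (lam *\<^sub>R e 3) = A *v e 3"
      using tA tB by (simp add: matrix_vector_mult_scaleR lam_def)
    hence "Bi *v (B *v (lam *\<^sub>R e 3)) = Bi *v (A *v e 3)" by simp
    thus ?thesis using Bi(2) by simp
  qed
  define a where "a = (Bi *v (A *v e 1))$1"
  define b where "b = (Bi *v (A *v e 1))$3"
  define w where "w = (\<lambda>x. Bi *v (A *v vector [x, 0, 1]))"
  have Bw: "B *v w x = A *v vector [x, 0, 1]" for x unfolding w_def using Bi(1) by simp
  have w2: "w x $ 2 = 0" for x
  proof -
    have "muB * w x $ 2 = nv \<bullet> (B *v w x)" using muB(2) by simp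
    also have "\<dots> = muA * (vector [x, 0, 1] :: real^3) $ 2" unfolding Bw muA ..
    finally show ?thesis using muB(1) by simp
  qed
  have wlin: "w x = x *\<^sub>R (Bi *v (A *v e 1)) + lam *\<^sub>R e 3" for x
    unfolding w_def chart_decomp
    by (simp add: matrix_vector_right_distrib matrix_vector_mult_scaleR Bie3)
  have w1: "w x $ 1 = a * x" for x unfolding wlin a_def by (simp add: axis_def)
  have w3: "w x $ 3 = lam + b * x" for x unfolding wlin b_def by (simp add: axis_def)
  have key: "f (A *v vector [x, 0, 1]) = \<kappa> * (a * x)^4" if nz: "lam + b * x \<noteq> 0" for x
  proof -
    have "w x = (w x $ 3) *\<^sub>R vector [w x $ 1 / w x $ 3, 0, 1]"
      using nz w2[of x] unfolding w3[symmetric] by (simp add: vec_eq_iff forall_3)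
    hence "A *v vector [x, 0, 1] = (w x $ 3) *\<^sub>R (B *v vector [w x $ 1 / w x $ 3, 0, 1])"
      by (metis Bw matrix_vector_mult_scaleR)
    hence "f (A *v vector [x, 0, 1]) = (w x $ 3)^4 * (\<kappa> * (w x $ 1 / w x $ 3)^4)"
      using H_hom[OF f] PB by simp
    also have "\<dots> = \<kappa> * (w x $ 1)^4" using nz unfolding w3[symmetric]
      by (simp add: field_simps power_divide)
    finally show ?thesis unfolding w1 .
  qed
  define \<phi> where "\<phi> = (\<lambda>x. f (A *v vector [x, 0, 1]) - \<kappa> * (a * x)^4)"
  have off: "\<phi> y = 0" if "y \<noteq> -lam/b" for y
  proof -
    have "lam + b * y \<noteq> 0" using lam that by (cases "b = 0") (auto simp: field_simps)
    thus "\<phi> y = 0" using key unfolding \<phi>_def by simp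
  qed
  have "\<phi> (-lam/b) = 0"
  proof (rule cont_eq_off_point[of _ "-lam/b"])
    have "continuous_on UNIV (\<lambda>x. A *v vector [x, 0, 1])" unfolding chart_decomp
      by (intro continuous_intros)
    hence "continuous_on UNIV (\<lambda>x. f (A *v vector [x, 0, 1]))"
      by (rule continuous_on_compose2[OF H_cont[OF f]]) auto
    thus "continuous_on UNIV \<phi>" unfolding \<phi>_def
      by (intro continuous_intros)
  qed (rule off)
  with off have "\<phi> x = 0" for x by metis
  thus ?thesis unfolding \<phi>_def by (intro exI[of _ "\<kappa> * a^4"]) (simp add: power_mult_distrib)
qed

lemma quartic_coeffs: assumes rep: "local_rep 4 f A d" and P: "\<forall>x. f (A *v vector [x, 0, 1]) = \<kappa> * x^4"
  shows "d 0 0 = 0 \<and> d 1 0 = 0 \<and> d 2 0 = 0 \<and> d 3 0 = 0"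
proof -
  have "\<forall>x::real. (\<Sum>i\<le>4. d i 0 * x^i) = (\<Sum>i\<le>4. (if i = 4 then \<kappa> else 0) * x^i)"
  proof
    fix x :: real
    have "(\<Sum>i\<le>4. d i 0 * x^i) = f (A *v vector [x, 0, 1])"
      using rep unfolding local_rep_def by (simp add: rep_y0)
    moreover have "(\<Sum>i\<le>4. (if i = 4 then \<kappa> else 0) * x^i) = \<kappa> * x^4"
      by (simp only: sum4) simp
    ultimately show "(\<Sum>i\<le>4. d i 0 * x^i) = (\<Sum>i\<le>4. (if i = 4 then \<kappa> else 0) * x^i)" using P
      by simp
  qed
  note h = poly_coeffs_eq[OF this, rule_format]
  show ?thesis using h[of 0] h[of 1] h[of 2] h[of 3] by simp
qed

lemma Epl: assumes f: "f \<in> H 4" and nn: "\<forall>v. f v \<ge> 0" and fp: "f p = 0"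
  and chB: "chart_line p nv B" and repB: "local_rep 4 f B c" and c20: "c 2 0 = 0"
  and chA: "chart_line p nv A" and repA: "local_rep 4 f A d"
  shows "d 0 0 = 0 \<and> d 1 0 = 0 \<and> d 0 1 = 0 \<and> d 2 0 = 0 \<and> d 1 1 = 0 \<and> d 3 0 = 0"
proof -
  obtain \<kappa>' where "\<forall>x. f (A *v vector [x, 0, 1]) = \<kappa>' * x^4"
    using line_transfer[OF f chB chA Epl_B[OF f nn fp chB repB c20]] by blast
  from quartic_coeffs[OF repA this] have z: "d 0 0 = 0" "d 1 0 = 0" "d 2 0 = 0" "d 3 0 = 0" by auto
  have "d 0 1 = 0" using E1[OF f nn fp chart_line_chart[OF chA] repA] by auto
  with z E11[OF f nn repA] show ?thesis by auto
qed

lemma chart_line_exists: assumes p: "(p::real^3) \<noteq> 0" and nv: "nv \<noteq> 0" and o: "nv \<bullet> p = 0"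
  shows "\<exists>A. chart_line p nv A"
proof -
  define u :: "real^3" where "u = vector [nv$2 * p$3 - nv$3 * p$2, nv$3 * p$1 - nv$1 * p$3, nv$1 * p$2 - nv$2 * p$1]"
  define A :: "real^3^3" where "A = (\<chi> i j. if j = 1 then u$i else if j = 2 then nv$i else p$i)"
  have o': "nv$1 * p$1 + nv$2 * p$2 + nv$3 * p$3 = 0" using o by (simp add: inner3)
  have lag: "u$1^2 + u$2^2 + u$3^2 = (nv$1^2 + nv$2^2 + nv$3^2) * (p$1^2 + p$2^2 + p$3^2) - (nv$1 * p$1 + nv$2 * p$2 + nv$3 * p$3)^2"
    unfolding u_def by (simp add: power2_eq_square algebra_simps)
  have np: "nv$1^2 + nv$2^2 + nv$3^2 > 0"
  proof -
    have "nv \<bullet> nv > 0" using nv by simp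
    thus ?thesis by (simp add: inner3 power2_eq_square)
  qed
  have pp: "p$1^2 + p$2^2 + p$3^2 > 0"
  proof -
    have "p \<bullet> p > 0" using p by simp
    thus ?thesis by (simp add: inner3 power2_eq_square)
  qed
  have upos: "u$1^2 + u$2^2 + u$3^2 > 0" unfolding lag o' using np pp by simp
  have "det A = u$1^2 + u$2^2 + u$3^2"
    unfolding det_3 A_def u_def by (simp add: power2_eq_square algebra_simps)
  hence inv: "invertible A" using upos by (simp add: invertible_det_nz)
  have Ae3: "A *v e 3 = p"
    by (simp add: A_def vec_eq_iff forall_3 matrix_vector_mult_def sum_3 axis_def)
  have "transpose A *v nv = (nv$1^2 + nv$2^2 + nv$3^2) *\<^sub>R e 2"
    using o' by (simp add: A_def u_def vec_eq_iff forall_3 matrix_vector_mult_def sum_3 axis_def transpose_def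
        power2_eq_square algebra_simps)
  hence "proj_eq (transpose A *v nv) (e 2)" unfolding proj_eq_def using np by auto
  moreover have "proj_eq (A *v e 3) p" unfolding Ae3 proj_eq_def by (intro exI[of _ 1]) simp
  ultimately show ?thesis using inv unfolding chart_line_def chart_def by blast
qed

lemma perp_exists: assumes "(p::real^3) \<noteq> 0" shows "\<exists>nv. nv \<noteq> 0 \<and> nv \<bullet> p = 0"
proof (cases "p$1 = 0 \<and> p$2 = 0")
  case True
  thus ?thesis by (intro exI[of _ "e 1"]) (simp add: inner_axis' axis_eq_0_iff)
next
  case False
  thus ?thesis by (intro exI[of _ "vector [p$2, - p$1, 0]"]) (auto simp: inner3 vec_eq_iff forall_3)
qed

lemma chart_exists: assumes "(p::real^3) \<noteq> 0" shows "\<exists>A. chart p A"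
  using perp_exists[OF assms] chart_line_exists[OF assms] chart_line_chart by blast

lemma rep_bound:
  assumes "\<And>i j. i \<le> k \<Longrightarrow> j \<le> k - i \<Longrightarrow> d i j = 0 \<or> \<bar>x^i * y^j\<bar> \<le> (B::real)"
  shows "\<bar>\<Sum>i\<le>k. \<Sum>j\<le>k - i. d i j * x^i * y^j\<bar> \<le> (\<Sum>i\<le>k. \<Sum>j\<le>k - i. \<bar>d i j\<bar>) * B"
proof -
  have "\<bar>\<Sum>i\<le>k. \<Sum>j\<le>k - i. d i j * x^i * y^j\<bar> \<le> (\<Sum>i\<le>k. \<Sum>j\<le>k - i. \<bar>d i j * x^i * y^j\<bar>)"
    by (rule order_trans[OF sum_abs sum_mono]) (rule sum_abs)
  also have "\<dots> \<le> (\<Sum>i\<le>k. \<Sum>j\<le>k - i. \<bar>d i j\<bar> * B)"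
  proof (intro sum_mono)
    fix i j assume "i \<in> {..k}" "j \<in> {..k-i}"
    hence "d i j = 0 \<or> \<bar>x^i * y^j\<bar> \<le> B" using assms by auto
    thus "\<bar>d i j * x^i * y^j\<bar> \<le> \<bar>d i j\<bar> * B"
      by (auto simp: abs_mult mult.assoc intro: mult_left_mono)
  qed
  also have "\<dots> = (\<Sum>i\<le>k. \<Sum>j\<le>k - i. \<bar>d i j\<bar>) * B" by (simp add: sum_distrib_right)
  finally show ?thesis .
qed

lemma abs_pow_le1: "\<bar>x::real\<bar> \<le> 1 \<Longrightarrow> \<bar>x^n\<bar> \<le> 1"
  by (simp add: power_abs power_le_one)

lemma abs_pow_le_sq: "\<bar>x::real\<bar> \<le> 1 \<Longrightarrow> n \<ge> 2 \<Longrightarrow> \<bar>x^n\<bar> \<le> x^2"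
proof -
  assume a: "\<bar>x\<bar> \<le> 1" "n \<ge> 2"
  have "\<bar>x^n\<bar> = \<bar>x\<bar>^n" by (simp add: power_abs)
  also have "\<dots> \<le> \<bar>x\<bar>^2" using a by (intro power_decreasing) auto
  also have "\<dots> = x^2" by simp
  finally show ?thesis .
qed

lemma abs_pow_le_4: "\<bar>x::real\<bar> \<le> 1 \<Longrightarrow> n \<ge> 4 \<Longrightarrow> \<bar>x^n\<bar> \<le> x^4"
proof -
  assume a: "\<bar>x\<bar> \<le> 1" "n \<ge> 4"
  have "\<bar>x^n\<bar> = \<bar>x\<bar>^n" by (simp add: power_abs)
  also have "\<dots> \<le> \<bar>x\<bar>^4" using a by (intro power_decreasing) auto
  also have "\<dots> = x^4" by (simp add: power_abs[symmetric])
  finally show ?thesis .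
qed

lemma amgm2: "2 * \<bar>a * b\<bar> \<le> a^2 + (b::real)^2"
proof -
  have "0 \<le> (\<bar>a\<bar> - \<bar>b\<bar>)^2" by simp
  thus ?thesis by (simp add: power2_eq_square abs_mult algebra_simps)
qed

lemma mono_bound_s: assumes "\<bar>x::real\<bar> \<le> 1" "\<bar>y\<bar> \<le> 1" "i + j \<ge> 2"
  shows "\<bar>x^i * y^j\<bar> \<le> x^2 + y^2"
proof -
  have x2: "x^2 \<ge> 0" and y2: "y^2 \<ge> 0" by simp_all
  consider "i \<ge> 2" | "i = 1" "j \<ge> 1" | "i = 0" "j \<ge> 2" using assms(3) by linarith
  thus ?thesis
  proof cases
    case 1
    have "\<bar>x^i * y^j\<bar> = \<bar>x^i\<bar> * \<bar>y^j\<bar>" by (simp add: abs_mult)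
    also have "\<dots> \<le> x^2 * 1" using abs_pow_le_sq[OF assms(1) 1] abs_pow_le1[OF assms(2)]
      by (intro mult_mono) auto
    finally have "\<bar>x^i * y^j\<bar> \<le> x^2" by simp
    thus ?thesis using y2 by linarith
  next
    case 2
    have "\<bar>x^i * y^j\<bar> = \<bar>x\<bar> * \<bar>y^j\<bar>" using 2 by (simp add: abs_mult)
    also have "\<dots> \<le> \<bar>x\<bar> * \<bar>y\<bar>"
    proof (intro mult_left_mono)
      have "\<bar>y^j\<bar> = \<bar>y\<bar>^j" by (simp add: power_abs)
      also have "\<dots> \<le> \<bar>y\<bar>^1" using 2 assms by (intro power_decreasing) auto
      finally show "\<bar>y^j\<bar> \<le> \<bar>y\<bar>" by simp
    qed simp
    also have "\<dots> \<le> x^2 + y^2" using amgm2[of x y] abs_ge_zero[of x] abs_ge_zero[of y]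
      by (simp add: abs_mult) (smt (verit) mult_nonneg_nonneg)
    finally show ?thesis .
  next
    case 3
    have "\<bar>x^i * y^j\<bar> = \<bar>y^j\<bar>" using 3 by simp
    also have "\<dots> \<le> y^2" using abs_pow_le_sq[OF assms(2) 3(2)] .
    finally have "\<bar>x^i * y^j\<bar> \<le> y^2" .
    thus ?thesis using x2 by linarith
  qed
qed

lemma mono_bound_p: assumes "\<bar>x::real\<bar> \<le> 1" "\<bar>y\<bar> \<le> 1" "i + j \<le> 4"
  "\<not> (i = 0 \<and> j = 0)" "\<not> (i = 1 \<and> j = 0)" "\<not> (i = 0 \<and> j = 1)" "\<not> (i = 2 \<and> j = 0)"
  "\<not> (i = 1 \<and> j = 1)" "\<not> (i = 3 \<and> j = 0)"
  shows "\<bar>x^i * y^j\<bar> \<le> y^2 + x^4"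
proof -
  have x4: "x^4 \<ge> 0" by simp
  have y2: "y^2 \<ge> 0" by simp
  have "j \<ge> 2 \<or> (j = 1 \<and> i \<ge> 2) \<or> (j = 0 \<and> i = 4)" using assms(3-9) by presburger
  then consider "j \<ge> 2" | "j = 1" "i \<ge> 2" | "j = 0" "i = 4" by blast
  thus ?thesis
  proof cases
    case 1
    have "\<bar>x^i * y^j\<bar> = \<bar>x^i\<bar> * \<bar>y^j\<bar>" by (simp add: abs_mult)
    also have "\<dots> \<le> 1 * y^2" using abs_pow_le_sq[OF assms(2) 1] abs_pow_le1[OF assms(1)]
      by (intro mult_mono) auto
    finally have "\<bar>x^i * y^j\<bar> \<le> y^2" by simp
    thus ?thesis using x4 by linarith
  next
    case 2
    have "\<bar>x^i * y^j\<bar> = \<bar>x^i\<bar> * \<bar>y\<bar>" using 2 by (simp add: abs_mult)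
    also have "\<dots> \<le> x^2 * \<bar>y\<bar>" using abs_pow_le_sq[OF assms(1) 2(2)] by (intro mult_right_mono) auto
    also have "\<dots> \<le> (y^2 + (x^2)^2) / 2" using amgm2[of y "x^2"] by (simp add: abs_mult algebra_simps)
    also have "\<dots> \<le> y^2 + x^4" using x4 y2 by (simp add: power_mult[symmetric])
    finally show ?thesis .
  next
    case 3 thus ?thesis using y2 by (simp add: power_abs)
  qed
qed

lemma rep_bound_s: assumes rep: "local_rep 4 h A d" and z: "d 0 0 = 0" "d 1 0 = 0" "d 0 1 = 0"
  and xy: "\<bar>x\<bar> \<le> 1" "\<bar>y\<bar> \<le> 1"
  shows "\<bar>h (A *v vector [x, y, 1])\<bar> \<le> (\<Sum>i\<le>4. \<Sum>j\<le>4 - i. \<bar>d i j\<bar>) * (x^2 + y^2)"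
proof -
  have "\<bar>\<Sum>i\<le>4. \<Sum>j\<le>4 - i. d i j * x^i * y^j\<bar> \<le> (\<Sum>i\<le>4. \<Sum>j\<le>4 - i. \<bar>d i j\<bar>) * (x^2 + y^2)"
  proof (rule rep_bound)
    fix i j :: nat assume "i \<le> 4" "j \<le> 4 - i"
    show "d i j = 0 \<or> \<bar>x^i * y^j\<bar> \<le> x^2 + y^2"
    proof (cases "i + j \<ge> 2")
      case True thus ?thesis using mono_bound_s[OF xy True] by simp
    next
      case False
      hence "(i = 0 \<and> j = 0) \<or> (i = 1 \<and> j = 0) \<or> (i = 0 \<and> j = 1)" by presburger
      thus ?thesis using z by blast
    qed
  qed
  thus ?thesis using rep unfolding local_rep_def by simp
qed

lemma rep_bound_p: assumes rep: "local_rep 4 h A d"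
  and z: "d 0 0 = 0" "d 1 0 = 0" "d 0 1 = 0" "d 2 0 = 0" "d 1 1 = 0" "d 3 0 = 0"
  and xy: "\<bar>x\<bar> \<le> 1" "\<bar>y\<bar> \<le> 1"
  shows "\<bar>h (A *v vector [x, y, 1])\<bar> \<le> (\<Sum>i\<le>4. \<Sum>j\<le>4 - i. \<bar>d i j\<bar>) * (y^2 + x^4)"
proof -
  have "\<bar>\<Sum>i\<le>4. \<Sum>j\<le>4 - i. d i j * x^i * y^j\<bar> \<le> (\<Sum>i\<le>4. \<Sum>j\<le>4 - i. \<bar>d i j\<bar>) * (y^2 + x^4)"
  proof (rule rep_bound)
    fix i j :: nat assume ij: "i \<le> 4" "j \<le> 4 - i"
    show "d i j = 0 \<or> \<bar>x^i * y^j\<bar> \<le> y^2 + x^4"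
    proof (cases "(i = 0 \<and> j = 0) \<or> (i = 1 \<and> j = 0) \<or> (i = 0 \<and> j = 1) \<or> (i = 2 \<and> j = 0) \<or> (i = 1 \<and> j = 1) \<or> (i = 3 \<and> j = 0)")
      case True thus ?thesis using z by blast
    next
      case False
      have ij4: "i + j \<le> 4" using ij by simp
      show ?thesis using mono_bound_p[OF xy ij4] False by blast
    qed
  qed
  thus ?thesis using rep unfolding local_rep_def by simp
qed

lemma sq_half: "(L + R)^2 \<ge> L^2/2 - (R::real)^2"
proof -
  have "(L + R)^2 - (L^2/2 - R^2) = (L + 2*R)^2 / 2" by (simp add: power2_eq_square algebra_simps)
  moreover have "(L + 2*R)^2 / 2 \<ge> 0" by simp
  ultimately show ?thesis by linarith
qed

lemma sq_le_of_abs: "\<bar>a::real\<bar> \<le> b \<Longrightarrow> a^2 \<le> b^2"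
  by (metis abs_ge_zero abs_le_square_iff abs_of_nonneg order_trans)

lemma low_s: fixes La Lb Ra Rb K N r :: real
  assumes K: "K > 0" and r: "r \<ge> 0" "r \<le> K * (La^2 + Lb^2)" and Ra: "\<bar>Ra\<bar> \<le> N * r" and Rb: "\<bar>Rb\<bar> \<le> N * r"
    and N: "N \<ge> 0" and small: "N^2 * r \<le> 1/(8*K)"
  shows "(La + Ra)^2 + (Lb + Rb)^2 \<ge> r / (4*K)"
proof -
  have a: "Ra^2 \<le> (N*r)^2" by (rule sq_le_of_abs[OF Ra])
  have b: "Rb^2 \<le> (N*r)^2" by (rule sq_le_of_abs[OF Rb])
  have "(N*r)^2 = (N^2 * r) * r" by (simp add: power2_eq_square)
  also have "\<dots> \<le> (1/(8*K)) * r" using small r(1) by (rule mult_right_mono)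
  finally have c: "(N*r)^2 \<le> r / (8*K)" by simp
  define u where "u = r / (8*K)"
  have d: "8 * u \<le> La^2 + Lb^2" using r(2) K unfolding u_def by (simp add: field_simps)
  have sh: "2 * (L + R)^2 \<ge> L^2 - 2 * R^2" for L R :: real
  proof -
    have "2 * (L + R)^2 - (L^2 - 2 * R^2) = (L + 2*R)^2" by (simp add: power2_eq_square algebra_simps)
    moreover have "(L + 2*R)^2 \<ge> 0" by simp
    ultimately show ?thesis by linarith
  qed
  have e: "2 * (La + Ra)^2 + 2 * (Lb + Rb)^2 \<ge> La^2 - 2 * Ra^2 + (Lb^2 - 2 * Rb^2)" using sh[of La Ra] sh[of Lb Rb] by linarith
  have f: "r / (4*K) = 2 * u" using K unfolding u_def by (simp add: field_simps)
  have c': "(N*r)^2 \<le> u" using c unfolding u_def .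
  show ?thesis unfolding f using a b c' d e by linarith
qed

lemma det_bound: fixes a1 a2 b1 b2 x y :: real
  assumes D: "a1 * b2 - a2 * b1 \<noteq> 0"
  shows "x^2 + y^2 \<le> (2 * (a1^2 + a2^2 + b1^2 + b2^2) / (a1 * b2 - a2 * b1)^2) * ((a1*x + a2*y)^2 + (b1*x + b2*y)^2)"
proof -
  define D where "D = a1 * b2 - a2 * b1"
  define La where "La = a1*x + a2*y"
  define Lb where "Lb = b1*x + b2*y"
  define S where "S = a1^2 + a2^2 + b1^2 + b2^2"
  have D2: "D^2 > 0" using D unfolding D_def by simp
  have id: "D^2 * (x^2 + y^2) = (b2 * La - a2 * Lb)^2 + (a1 * Lb - b1 * La)^2"
    unfolding D_def La_def Lb_def by (simp add: power2_eq_square algebra_simps)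
  have e1: "(b2 * La - a2 * Lb)^2 \<le> 2 * (b2^2 * La^2 + a2^2 * Lb^2)"
  proof -
    have "0 \<le> (b2 * La + a2 * Lb)^2" by simp
    thus ?thesis by (simp add: power2_eq_square algebra_simps)
  qed
  have e2: "(a1 * Lb - b1 * La)^2 \<le> 2 * (a1^2 * Lb^2 + b1^2 * La^2)"
  proof -
    have "0 \<le> (a1 * Lb + b1 * La)^2" by simp
    thus ?thesis by (simp add: power2_eq_square algebra_simps)
  qed
  have e3: "2 * (b2^2 * La^2 + a2^2 * Lb^2) + 2 * (a1^2 * Lb^2 + b1^2 * La^2) \<le> 2 * S * (La^2 + Lb^2)"
  proof -
    have "0 \<le> (a1^2 + a2^2) * La^2 + (b1^2 + b2^2) * Lb^2" by simp
    thus ?thesis unfolding S_def by (simp add: algebra_simps)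
  qed
  have "D^2 * (x^2 + y^2) \<le> 2 * S * (La^2 + Lb^2)" using id e1 e2 e3 by linarith
  hence "x^2 + y^2 \<le> 2 * S * (La^2 + Lb^2) / D^2" using D2 by (simp add: field_simps)
  thus ?thesis unfolding D_def S_def La_def Lb_def by (simp add: field_simps)
qed

lemma quad_rem_bound: "\<bar>R1 * x^2 + R2 * x * y + R3 * y^2\<bar> \<le> (\<bar>R1\<bar> + \<bar>R2\<bar> + \<bar>R3\<bar>) * (x^2 + (y::real)^2)"
proof -
  have xy: "\<bar>x * y\<bar> \<le> x^2 + y^2"
  proof -
    have "2 * \<bar>x * y\<bar> \<le> x^2 + y^2" by (rule amgm2)
    moreover have "\<bar>x * y\<bar> \<ge> 0" by simp
    ultimately show ?thesis by linarith
  qed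
  have t: "\<bar>R1 * x^2 + R2 * x * y + R3 * y^2\<bar> \<le> \<bar>R1 * x^2\<bar> + \<bar>R2 * x * y\<bar> + \<bar>R3 * y^2\<bar>"
    by (rule order_trans[OF abs_triangle_ineq add_right_mono[OF abs_triangle_ineq]])
  have a1: "\<bar>R1 * x^2\<bar> \<le> \<bar>R1\<bar> * (x^2 + y^2)" by (simp add: abs_mult mult_left_mono)
  have a2: "\<bar>R2 * x * y\<bar> \<le> \<bar>R2\<bar> * (x^2 + y^2)" using xy by (simp add: abs_mult mult.assoc mult_left_mono)
  have a3: "\<bar>R3 * y^2\<bar> \<le> \<bar>R3\<bar> * (x^2 + y^2)" by (simp add: abs_mult mult_left_mono)
  have "(\<bar>R1\<bar> + \<bar>R2\<bar> + \<bar>R3\<bar>) * (x^2 + y^2) = \<bar>R1\<bar> * (x^2 + y^2) + \<bar>R2\<bar> * (x^2 + y^2) + \<bar>R3\<bar> * (x^2 + y^2)"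
    by (simp add: algebra_simps)
  thus ?thesis using t a1 a2 a3 by linarith
qed


lemma sh2: "2 * (L + R)^2 \<ge> L^2 - 2 * (R::real)^2"
proof -
  have "2 * (L + R)^2 - (L^2 - 2 * R^2) = (L + 2*R)^2" by (simp add: power2_eq_square algebra_simps)
  moreover have "(L + 2*R)^2 \<ge> 0" by simp
  ultimately show ?thesis by linarith
qed

lemma abs_lin2_bound: assumes "\<bar>x\<bar> \<le> d0" "\<bar>y\<bar> \<le> d0"
  shows "\<bar>a * x + b * (y::real)\<bar> \<le> (\<bar>a\<bar> + \<bar>b\<bar>) * d0"
proof -
  have "\<bar>a * x + b * y\<bar> \<le> \<bar>a\<bar> * \<bar>x\<bar> + \<bar>b\<bar> * \<bar>y\<bar>" by (metis abs_mult abs_triangle_ineq)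
  also have "\<dots> \<le> \<bar>a\<bar> * d0 + \<bar>b\<bar> * d0" using assms by (intro add_mono mult_left_mono) auto
  finally show ?thesis by (simp add: algebra_simps)
qed

lemma low_p: fixes \<beta> \<gamma> \<sigma> \<tau> \<delta> \<epsilon> x y d0 :: real
  assumes xy: "\<bar>x\<bar> \<le> d0" "\<bar>y\<bar> \<le> d0"
    and s1: "2 * ((\<bar>\<sigma>\<bar> + \<bar>\<tau>\<bar>) * d0) \<le> \<bar>\<beta>\<bar>"
    and s2: "8 * ((\<bar>\<delta>\<bar> + \<bar>\<epsilon>\<bar>) * d0)^2 \<le> \<beta>^2"
  shows "(y * (\<beta> + \<sigma> * x + \<tau> * y))^2 + (\<gamma> * x^2 + y * (\<delta> * x + \<epsilon> * y))^2
     \<ge> min (\<beta>^2/8) (\<gamma>^2/2) * (y^2 + x^4)"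
proof -
  have b1: "\<bar>\<sigma> * x + \<tau> * y\<bar> \<le> (\<bar>\<sigma>\<bar> + \<bar>\<tau>\<bar>) * d0" by (rule abs_lin2_bound[OF xy])
  have b2: "\<bar>\<beta> + \<sigma> * x + \<tau> * y\<bar> \<ge> \<bar>\<beta>\<bar> / 2"
  proof -
    have "\<bar>\<beta>\<bar> \<le> \<bar>\<beta> + (\<sigma> * x + \<tau> * y)\<bar> + \<bar>\<sigma> * x + \<tau> * y\<bar>" by (smt (verit) abs_triangle_ineq4)
    thus ?thesis using b1 s1 by (simp add: add.assoc)
  qed
  have b3: "(\<beta> + \<sigma> * x + \<tau> * y)^2 \<ge> \<beta>^2 / 4"
  proof -
    have "(\<bar>\<beta>\<bar> / 2)^2 \<le> (\<bar>\<beta> + \<sigma> * x + \<tau> * y\<bar>)^2"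
      using b2 by (intro power_mono) auto
    thus ?thesis by (simp add: power_divide)
  qed
  have T1: "(y * (\<beta> + \<sigma> * x + \<tau> * y))^2 \<ge> y^2 * (\<beta>^2 / 4)"
    unfolding power_mult_distrib by (intro mult_left_mono b3) simp
  define w where "w = \<delta> * x + \<epsilon> * y"
  have w1: "\<bar>w\<bar> \<le> (\<bar>\<delta>\<bar> + \<bar>\<epsilon>\<bar>) * d0" unfolding w_def by (rule abs_lin2_bound[OF xy])
  have w2: "w^2 \<le> \<beta>^2 / 8"
  proof -
    have "w^2 \<le> ((\<bar>\<delta>\<bar> + \<bar>\<epsilon>\<bar>) * d0)^2" by (rule sq_le_of_abs[OF w1])
    thus ?thesis using s2 by simp
  qed
  have T2a: "(y * w)^2 \<le> y^2 * (\<beta>^2 / 8)" unfolding power_mult_distrib by (intro mult_left_mono w2) simp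
  have T2: "2 * (\<gamma> * x^2 + y * w)^2 \<ge> \<gamma>^2 * x^4 - 2 * (y * w)^2"
    using sh2[of "\<gamma> * x^2" "y * w"] by (simp add: power_mult_distrib power_mult[symmetric])
  define Z where "Z = y^2 * \<beta>^2"
  define G where "G = \<gamma>^2 * x^4"
  have T1': "(y * (\<beta> + \<sigma> * x + \<tau> * y))^2 \<ge> Z / 4" using T1 unfolding Z_def by simp
  have T2a': "(y * w)^2 \<le> Z / 8" using T2a unfolding Z_def by simp
  have T2': "2 * (\<gamma> * x^2 + y * w)^2 \<ge> G - 2 * (y * w)^2" using T2 unfolding G_def .
  have main0: "(y * (\<beta> + \<sigma> * x + \<tau> * y))^2 + (\<gamma> * x^2 + y * w)^2 \<ge> Z/8 + G/2"
    using T1' T2a' T2' by linarith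
  have main: "(y * (\<beta> + \<sigma> * x + \<tau> * y))^2 + (\<gamma> * x^2 + y * w)^2 \<ge> (\<beta>^2/8) * y^2 + (\<gamma>^2/2) * x^4"
    using main0 unfolding Z_def G_def by (simp add: algebra_simps)
  have m1: "min (\<beta>^2/8) (\<gamma>^2/2) * y^2 \<le> (\<beta>^2/8) * y^2" by (intro mult_right_mono) auto
  have m2: "min (\<beta>^2/8) (\<gamma>^2/2) * x^4 \<le> (\<gamma>^2/2) * x^4" by (intro mult_right_mono) auto
  have "min (\<beta>^2/8) (\<gamma>^2/2) * (y^2 + x^4) = min (\<beta>^2/8) (\<gamma>^2/2) * y^2 + min (\<beta>^2/8) (\<gamma>^2/2) * x^4"
    by (simp add: algebra_simps)
  thus ?thesis using main m1 m2 unfolding w_def by linarith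
qed

lemma H2_zero_scale: "q \<in> H 2 \<Longrightarrow> q a = 0 \<Longrightarrow> q (t *\<^sub>R a) = 0"
  using H_hom[of q 2 t a] by simp

lemma perp_all_zero: assumes inv: "invertible (A::real^3^3)"
  and "g \<bullet> (A *v e 1) = 0" "g \<bullet> (A *v e 2) = 0" "g \<bullet> (A *v e 3) = 0"
  shows "g = 0"
proof -
  obtain Ai where Ai: "\<And>v. A *v (Ai *v v) = v" using inv_ex[OF inv] by blast
  have "g \<bullet> (A *v (Ai *v g)) = 0"
    by (subst matvec_decomp) (simp add: inner_add_right assms(2-4))
  thus ?thesis using Ai by simp
qed

lemma LB_s: assumes qa: "qa \<in> H 2" and qb: "qb \<in> H 2" and ch: "chart s A"
  and za: "qa s = 0" and zb: "qb s = 0"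
  and ind: "\<forall>\<mu> \<nu>. \<mu> *\<^sub>R grad qa s + \<nu> *\<^sub>R grad qb s = 0 \<longrightarrow> \<mu> = 0 \<and> \<nu> = 0"
  shows "\<exists>c>0. \<exists>\<delta>>0. \<forall>x y. \<bar>x\<bar> \<le> \<delta> \<longrightarrow> \<bar>y\<bar> \<le> \<delta> \<longrightarrow>
     c * (x^2 + y^2) \<le> (qa (A *v vector [x, y, 1]))^2 + (qb (A *v vector [x, y, 1]))^2"
proof -
  obtain t where t: "t \<noteq> 0" "A *v e 3 = t *\<^sub>R s" using chart_e3[OF ch] by auto
  have inv: "invertible A" using ch unfolding chart_def by simp
  define E1 where "E1 = A *v e 1"
  define E2 where "E2 = A *v e 2"
  define ga where "ga = grad qa s"
  define gb where "gb = grad qb s"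
  define a1 where "a1 = t * (ga \<bullet> E1)"
  define a2 where "a2 = t * (ga \<bullet> E2)"
  define b1 where "b1 = t * (gb \<bullet> E1)"
  define b2 where "b2 = t * (gb \<bullet> E2)"
  have Qa: "qa (A *v vector [x, y, 1]) = (a1 * x + a2 * y) + (qa E1 * x^2 + (grad qa E1 \<bullet> E2) * x * y + qa E2 * y^2)" for x y
    unfolding H2_chart[OF qa] t(2) H2_grad_scale[OF qa] H2_zero_scale[OF qa za] a1_def a2_def ga_def E1_def E2_def
    by (simp add: algebra_simps)
  have Qb: "qb (A *v vector [x, y, 1]) = (b1 * x + b2 * y) + (qb E1 * x^2 + (grad qb E1 \<bullet> E2) * x * y + qb E2 * y^2)" for x y
    unfolding H2_chart[OF qb] t(2) H2_grad_scale[OF qb] H2_zero_scale[OF qb zb] b1_def b2_def gb_def E1_def E2_def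
    by (simp add: algebra_simps)
  have D: "a1 * b2 - a2 * b1 \<noteq> 0"
  proof
    assume D0: "a1 * b2 - a2 * b1 = 0"
    have "\<exists>\<mu> \<nu>. (\<mu> \<noteq> 0 \<or> \<nu> \<noteq> 0) \<and> \<mu> * a1 + \<nu> * b1 = 0 \<and> \<mu> * a2 + \<nu> * b2 = 0"
    proof (cases "b1 \<noteq> 0 \<or> a1 \<noteq> 0")
      case True
      show ?thesis using True D0 by (intro exI[of _ b1] exI[of _ "-a1"]) (auto simp: algebra_simps)
    next
      case False
      show ?thesis
      proof (cases "b2 \<noteq> 0 \<or> a2 \<noteq> 0")
        case True
        show ?thesis using True False by (intro exI[of _ b2] exI[of _ "-a2"]) (auto simp: algebra_simps)
      next
        case False2: False
        show ?thesis using False False2 by (intro exI[of _ 1] exI[of _ 0]) auto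
      qed
    qed
    then obtain \<mu> \<nu> where mn: "\<mu> \<noteq> 0 \<or> \<nu> \<noteq> 0" "\<mu> * a1 + \<nu> * b1 = 0" "\<mu> * a2 + \<nu> * b2 = 0" by blast
    define g where "g = \<mu> *\<^sub>R ga + \<nu> *\<^sub>R gb"
    have g1: "g \<bullet> (A *v e 1) = 0"
    proof -
      have "t * (g \<bullet> (A *v e 1)) = \<mu> * a1 + \<nu> * b1"
        unfolding g_def a1_def b1_def E1_def by (simp add: inner_add_left algebra_simps)
      thus ?thesis using mn t by simp
    qed
    have g2: "g \<bullet> (A *v e 2) = 0"
    proof -
      have "t * (g \<bullet> (A *v e 2)) = \<mu> * a2 + \<nu> * b2"
        unfolding g_def a2_def b2_def E2_def by (simp add: inner_add_left algebra_simps)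
      thus ?thesis using mn t by simp
    qed
    have g3: "g \<bullet> (A *v e 3) = 0"
      unfolding t(2) g_def ga_def gb_def
      by (simp add: inner_add_left H2_euler[OF qa] H2_euler[OF qb] za zb)
    have "g = 0" by (rule perp_all_zero[OF inv g1 g2 g3])
    hence "\<mu> = 0 \<and> \<nu> = 0" using ind unfolding g_def ga_def gb_def by blast
    thus False using mn by simp
  qed
  define K where "K = 2 * (a1^2 + a2^2 + b1^2 + b2^2) / (a1 * b2 - a2 * b1)^2"
  have Kpos: "K > 0"
  proof -
    have "a1^2 + a2^2 + b1^2 + b2^2 > 0"
    proof (rule ccontr)
      assume "\<not> a1^2 + a2^2 + b1^2 + b2^2 > 0"
      moreover have "a1^2 \<ge> 0" "a2^2 \<ge> 0" "b1^2 \<ge> 0" "b2^2 \<ge> 0" by simp_all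
      ultimately have "a1^2 = 0" "b1^2 = 0" by linarith+
      hence "a1 = 0" "b1 = 0" by simp_all
      thus False using D by simp
    qed
    thus ?thesis unfolding K_def using D by simp
  qed
  define N where "N = (\<bar>qa E1\<bar> + \<bar>grad qa E1 \<bullet> E2\<bar> + \<bar>qa E2\<bar>) + (\<bar>qb E1\<bar> + \<bar>grad qb E1 \<bullet> E2\<bar> + \<bar>qb E2\<bar>)"
  have N0: "N \<ge> 0" unfolding N_def by simp
  define \<delta> where "\<delta> = min 1 (1 / (16 * K * (N^2 + 1)))"
  have "N^2 + 1 > 0" by (simp add: add_nonneg_pos)
  hence kn: "K * (N^2 + 1) > 0" using Kpos by (rule mult_pos_pos[rotated])
  hence dpos: "\<delta> > 0" unfolding \<delta>_def by simp
  have cpos: "1/(4*K) > 0" using Kpos by simp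
  have "\<forall>x y. \<bar>x\<bar> \<le> \<delta> \<longrightarrow> \<bar>y\<bar> \<le> \<delta> \<longrightarrow>
     1/(4*K) * (x^2 + y^2) \<le> (qa (A *v vector [x, y, 1]))^2 + (qb (A *v vector [x, y, 1]))^2"
  proof (intro allI impI)
    fix x y :: real assume x: "\<bar>x\<bar> \<le> \<delta>" and y: "\<bar>y\<bar> \<le> \<delta>"
    define r where "r = x^2 + y^2"
    have r0: "r \<ge> 0" unfolding r_def by simp
    have rK: "r \<le> K * ((a1 * x + a2 * y)^2 + (b1 * x + b2 * y)^2)"
      unfolding r_def K_def by (rule det_bound[OF D])
    have Ra: "\<bar>qa E1 * x^2 + (grad qa E1 \<bullet> E2) * x * y + qa E2 * y^2\<bar> \<le> N * r"
    proof -
      have "\<bar>qa E1 * x^2 + (grad qa E1 \<bullet> E2) * x * y + qa E2 * y^2\<bar> \<le> (\<bar>qa E1\<bar> + \<bar>grad qa E1 \<bullet> E2\<bar> + \<bar>qa E2\<bar>) * r"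
        unfolding r_def by (rule quad_rem_bound)
      also have "\<dots> \<le> N * r" unfolding N_def using r0 by (intro mult_right_mono) auto
      finally show ?thesis .
    qed
    have Rb: "\<bar>qb E1 * x^2 + (grad qb E1 \<bullet> E2) * x * y + qb E2 * y^2\<bar> \<le> N * r"
    proof -
      have "\<bar>qb E1 * x^2 + (grad qb E1 \<bullet> E2) * x * y + qb E2 * y^2\<bar> \<le> (\<bar>qb E1\<bar> + \<bar>grad qb E1 \<bullet> E2\<bar> + \<bar>qb E2\<bar>) * r"
        unfolding r_def by (rule quad_rem_bound)
      also have "\<dots> \<le> N * r" unfolding N_def using r0 by (intro mult_right_mono) auto
      finally show ?thesis .
    qed
    have small: "N^2 * r \<le> 1 / (8 * K)"
    proof -
      have d1: "\<delta> \<le> 1" "\<delta> \<le> 1 / (16 * K * (N^2 + 1))" unfolding \<delta>_def by auto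
      have "x^2 \<le> \<delta>^2" using x by (metis abs_le_square_iff abs_of_pos dpos)
      moreover have "y^2 \<le> \<delta>^2" using y by (metis abs_le_square_iff abs_of_pos dpos)
      moreover have "\<delta>^2 \<le> \<delta>" using d1 dpos by (simp add: power2_eq_square mult_le_cancel_right1)
      ultimately have "r \<le> 2 * \<delta>" unfolding r_def by linarith
      hence "N^2 * r \<le> (N^2 + 1) * (2 * \<delta>)" using r0 by (intro mult_mono) auto
      also have "\<dots> \<le> (N^2 + 1) * (2 * (1 / (16 * K * (N^2 + 1))))"
        using d1 by (intro mult_left_mono) auto
      also have "\<dots> = 1 / (8 * K)" using Kpos kn by (simp add: field_simps)
      finally show ?thesis .
    qed
    have "r / (4*K) \<le> ((a1 * x + a2 * y) + (qa E1 * x^2 + (grad qa E1 \<bullet> E2) * x * y + qa E2 * y^2))^2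
       + ((b1 * x + b2 * y) + (qb E1 * x^2 + (grad qb E1 \<bullet> E2) * x * y + qb E2 * y^2))^2"
      by (rule low_s[OF Kpos r0 rK Ra Rb N0 small])
    thus "1/(4*K) * (x^2 + y^2) \<le> (qa (A *v vector [x, y, 1]))^2 + (qb (A *v vector [x, y, 1]))^2"
      unfolding Qa Qb r_def by simp
  qed
  thus ?thesis using cpos dpos by blast
qed


lemma comb_sq: "(a - \<rho> * b)^2 + b^2 \<le> (2 + 2 * \<rho>^2) * (a^2 + (b::real)^2)"
proof -
  have "0 \<le> (a + \<rho> * b)^2 + 2 * \<rho>^2 * a^2 + b^2" by simp
  thus ?thesis by (simp add: power2_eq_square algebra_simps)
qed

lemma LB_p: assumes qa: "qa \<in> H 2" and qb: "qb \<in> H 2" and ch: "chart p A"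
  and za: "qa p = 0" and zb: "qb p = 0"
  and ga0: "grad qa p \<noteq> 0" and ga1: "grad qa p \<bullet> (A *v e 1) = 0"
  and gb0: "grad qb p = 0" and gam: "qb (A *v e 1) \<noteq> 0"
  shows "\<exists>c>0. \<exists>\<delta>>0. \<forall>x y. \<bar>x\<bar> \<le> \<delta> \<longrightarrow> \<bar>y\<bar> \<le> \<delta> \<longrightarrow>
     c * (y^2 + x^4) \<le> (qa (A *v vector [x, y, 1]))^2 + (qb (A *v vector [x, y, 1]))^2"
proof -
  obtain t where t: "t \<noteq> 0" "A *v e 3 = t *\<^sub>R p" using chart_e3[OF ch] by auto
  have inv: "invertible A" using ch unfolding chart_def by simp
  define E1 where "E1 = A *v e 1"
  define E2 where "E2 = A *v e 2"
  define \<beta> where "\<beta> = t * (grad qa p \<bullet> E2)"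
  define \<gamma> where "\<gamma> = qb E1"
  define dd where "dd = grad qb E1 \<bullet> E2"
  define ee where "ee = qb E2"
  define \<rho> where "\<rho> = qa E1 / \<gamma>"
  define \<sigma> where "\<sigma> = (grad qa E1 \<bullet> E2) - \<rho> * dd"
  define \<tau> where "\<tau> = qa E2 - \<rho> * ee"
  have gnz: "\<gamma> \<noteq> 0" unfolding \<gamma>_def E1_def using gam .
  have bnz: "\<beta> \<noteq> 0"
  proof
    assume "\<beta> = 0"
    hence g2: "grad qa p \<bullet> (A *v e 2) = 0" using t unfolding \<beta>_def E2_def by simp
    have g3: "grad qa p \<bullet> (A *v e 3) = 0" unfolding t(2) using H2_euler[OF qa] za by simp
    show False using perp_all_zero[OF inv ga1 g2 g3] ga0 by simp
  qed
  have Qa: "qa (A *v vector [x, y, 1]) = \<beta> * y + (qa E1 * x^2 + (grad qa E1 \<bullet> E2) * x * y + qa E2 * y^2)" for x y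
    unfolding H2_chart[OF qa] t(2) H2_grad_scale[OF qa] H2_zero_scale[OF qa za] \<beta>_def E1_def E2_def
    using ga1 by (simp add: algebra_simps)
  have Qb: "qb (A *v vector [x, y, 1]) = \<gamma> * x^2 + y * (dd * x + ee * y)" for x y
    unfolding H2_chart[OF qb] t(2) H2_grad_scale[OF qb] H2_zero_scale[OF qb zb] \<gamma>_def dd_def ee_def E1_def E2_def gb0
    by (simp add: algebra_simps power2_eq_square)
  have Qa': "qa (A *v vector [x, y, 1]) - \<rho> * qb (A *v vector [x, y, 1]) = y * (\<beta> + \<sigma> * x + \<tau> * y)" for x y
    unfolding Qa Qb \<sigma>_def \<tau>_def \<rho>_def using gnz by (simp add: field_simps power2_eq_square)
  define d0 where "d0 = min 1 (min (\<bar>\<beta>\<bar> / (2 * (\<bar>\<sigma>\<bar> + \<bar>\<tau>\<bar> + 1))) (\<bar>\<beta>\<bar> / (3 * (\<bar>dd\<bar> + \<bar>ee\<bar> + 1))))"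
  have p1: "\<bar>\<sigma>\<bar> + \<bar>\<tau>\<bar> + 1 > 0" "\<bar>dd\<bar> + \<bar>ee\<bar> + 1 > 0" by (simp_all add: add_nonneg_pos)
  have d0pos: "d0 > 0" unfolding d0_def using bnz p1 by simp
  have d0a: "d0 \<le> \<bar>\<beta>\<bar> / (2 * (\<bar>\<sigma>\<bar> + \<bar>\<tau>\<bar> + 1))" and d0b: "d0 \<le> \<bar>\<beta>\<bar> / (3 * (\<bar>dd\<bar> + \<bar>ee\<bar> + 1))"
    unfolding d0_def by (meson min.cobounded1 min.cobounded2 order_trans)+
  have s1: "2 * ((\<bar>\<sigma>\<bar> + \<bar>\<tau>\<bar>) * d0) \<le> \<bar>\<beta>\<bar>"
  proof -
    have "(\<bar>\<sigma>\<bar> + \<bar>\<tau>\<bar>) * d0 \<le> (\<bar>\<sigma>\<bar> + \<bar>\<tau>\<bar> + 1) * d0" using d0pos by (intro mult_right_mono) auto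
    also have "\<dots> \<le> (\<bar>\<sigma>\<bar> + \<bar>\<tau>\<bar> + 1) * (\<bar>\<beta>\<bar> / (2 * (\<bar>\<sigma>\<bar> + \<bar>\<tau>\<bar> + 1)))"
      using d0a p1 by (intro mult_left_mono) auto
    also have "\<dots> = \<bar>\<beta>\<bar> / 2" using p1 by (simp add: field_simps)
    finally show ?thesis by simp
  qed
  have s2: "8 * ((\<bar>dd\<bar> + \<bar>ee\<bar>) * d0)^2 \<le> \<beta>^2"
  proof -
    have "(\<bar>dd\<bar> + \<bar>ee\<bar>) * d0 \<le> (\<bar>dd\<bar> + \<bar>ee\<bar> + 1) * d0" using d0pos by (intro mult_right_mono) auto
    also have "\<dots> \<le> (\<bar>dd\<bar> + \<bar>ee\<bar> + 1) * (\<bar>\<beta>\<bar> / (3 * (\<bar>dd\<bar> + \<bar>ee\<bar> + 1)))"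
      using d0b p1 by (intro mult_left_mono) auto
    also have "\<dots> = \<bar>\<beta>\<bar> / 3" using p1 by (simp add: field_simps)
    finally have h: "(\<bar>dd\<bar> + \<bar>ee\<bar>) * d0 \<le> \<bar>\<beta>\<bar> / 3" .
    have "((\<bar>dd\<bar> + \<bar>ee\<bar>) * d0)^2 \<le> (\<bar>\<beta>\<bar> / 3)^2"
      using h d0pos by (intro power_mono) auto
    hence "8 * ((\<bar>dd\<bar> + \<bar>ee\<bar>) * d0)^2 \<le> 8 * (\<beta>^2 / 9)" by (simp add: power_divide)
    also have "\<dots> \<le> \<beta>^2" by simp
    finally show ?thesis .
  qed
  define m where "m = min (\<beta>^2/8) (\<gamma>^2/2)"
  have mpos: "m > 0" unfolding m_def using bnz gnz by simp
  have rp: "2 + 2 * \<rho>^2 > 0" by (simp add: add_pos_nonneg)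
  have "\<forall>x y. \<bar>x\<bar> \<le> d0 \<longrightarrow> \<bar>y\<bar> \<le> d0 \<longrightarrow>
     m / (2 + 2 * \<rho>^2) * (y^2 + x^4) \<le> (qa (A *v vector [x, y, 1]))^2 + (qb (A *v vector [x, y, 1]))^2"
  proof (intro allI impI)
    fix x y :: real assume x: "\<bar>x\<bar> \<le> d0" and y: "\<bar>y\<bar> \<le> d0"
    have L: "m * (y^2 + x^4) \<le> (y * (\<beta> + \<sigma> * x + \<tau> * y))^2 + (\<gamma> * x^2 + y * (dd * x + ee * y))^2"
      unfolding m_def by (rule low_p[OF x y s1 s2])
    also have "\<dots> = (qa (A *v vector [x, y, 1]) - \<rho> * qb (A *v vector [x, y, 1]))^2 + (qb (A *v vector [x, y, 1]))^2"
      by (simp only: Qa'[symmetric] Qb)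
    also have "\<dots> \<le> (2 + 2 * \<rho>^2) * ((qa (A *v vector [x, y, 1]))^2 + (qb (A *v vector [x, y, 1]))^2)"
      by (rule comb_sq)
    finally show "m / (2 + 2 * \<rho>^2) * (y^2 + x^4) \<le> (qa (A *v vector [x, y, 1]))^2 + (qb (A *v vector [x, y, 1]))^2"
      using rp by (simp add: field_simps)
  qed
  moreover have "m / (2 + 2 * \<rho>^2) > 0" using mpos rp by simp
  ultimately show ?thesis using d0pos by blast
qed

lemma dom_global:
  fixes h f0 :: "real^3 \<Rightarrow> real"
  assumes h: "h \<in> H 4" and f0: "f0 \<in> H 4" and nn: "\<forall>v. f0 v \<ge> 0"
  and loc: "\<And>v. v \<noteq> 0 \<Longrightarrow> f0 v = 0 \<Longrightarrow> \<exists>U C. open U \<and> v \<in> U \<and> (\<forall>w\<in>U. \<bar>h w\<bar> \<le> C * f0 w)"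
  shows "\<exists>C. \<forall>v. \<bar>h v\<bar> \<le> C * f0 v"
proof -
  define S where "S = sphere (0::real^3) 1"
  have cS: "compact S" unfolding S_def by simp
  have S0: "0 \<notin> S" unfolding S_def by simp
  have Sne: "S \<noteq> {}"
  proof -
    have "e 1 \<in> S" unfolding S_def by simp
    thus ?thesis by auto
  qed
  obtain v0 where "v0 \<in> S" and M: "\<forall>y\<in>S. \<bar>h y\<bar> \<le> \<bar>h v0\<bar>"
    using continuous_attains_sup[OF cS Sne, of "\<lambda>v. \<bar>h v\<bar>"] H_cont[OF h]
    by (auto intro: continuous_intros continuous_on_subset)
  define M where "M = \<bar>h v0\<bar>"
  have ex: "\<forall>v\<in>S. \<exists>UC. open (fst UC) \<and> v \<in> fst UC \<and> snd UC \<ge> 0 \<and> (\<forall>w\<in>fst UC \<inter> S. \<bar>h w\<bar> \<le> snd UC * f0 w)"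
  proof
    fix v assume vS: "v \<in> S"
    show "\<exists>UC. open (fst UC) \<and> v \<in> fst UC \<and> snd UC \<ge> 0 \<and> (\<forall>w\<in>fst UC \<inter> S. \<bar>h w\<bar> \<le> snd UC * f0 w)"
    proof (cases "f0 v = 0")
      case True
      have "v \<noteq> 0" using vS S0 by auto
      then obtain U C where U: "open U" "v \<in> U" "\<forall>w\<in>U. \<bar>h w\<bar> \<le> C * f0 w" using loc True by blast
      show ?thesis
      proof (intro exI[of _ "(U, max C 0)"] conjI ballI)
        fix w assume "w \<in> fst (U, max C 0) \<inter> S"
        hence "\<bar>h w\<bar> \<le> C * f0 w" using U by auto
        also have "\<dots> \<le> max C 0 * f0 w" using nn by (intro mult_right_mono) auto
        finally show "\<bar>h w\<bar> \<le> snd (U, max C 0) * f0 w" by simp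
      qed (use U in auto)
    next
      case False
      hence fpos: "f0 v > 0" using nn by (simp add: order_less_le)
      define U where "U = {w. f0 v / 2 < f0 w}"
      have oU: "open U" unfolding U_def
        by (rule open_Collect_less) (auto intro: continuous_intros H_cont[OF f0])
      show ?thesis
      proof (intro exI[of _ "(U, 2 * M / f0 v)"] conjI ballI)
        show "open (fst (U, 2 * M / f0 v))" using oU by simp
        show "v \<in> fst (U, 2 * M / f0 v)" using fpos unfolding U_def by simp
        have "M \<ge> 0" unfolding M_def by simp
        thus "snd (U, 2 * M / f0 v) \<ge> 0" using fpos by simp
        fix w assume w: "w \<in> fst (U, 2 * M / f0 v) \<inter> S"
        hence "\<bar>h w\<bar> \<le> M" using M unfolding M_def by auto
        also have "M \<le> 2 * M / f0 v * f0 w"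
        proof -
          have "f0 v / 2 < f0 w" using w unfolding U_def by simp
          hence "f0 v \<le> 2 * f0 w" by simp
          hence "M * f0 v \<le> M * (2 * f0 w)" using \<open>M \<ge> 0\<close> by (intro mult_left_mono)
          thus ?thesis using fpos by (simp add: field_simps)
        qed
        finally show "\<bar>h w\<bar> \<le> snd (U, 2 * M / f0 v) * f0 w" by simp
      qed
    qed
  qed
  then obtain UC where UC: "\<And>v. v \<in> S \<Longrightarrow> open (fst (UC v)) \<and> v \<in> fst (UC v) \<and> snd (UC v) \<ge> 0 \<and> (\<forall>w\<in>fst (UC v) \<inter> S. \<bar>h w\<bar> \<le> snd (UC v) * f0 w)"
    by metis
  obtain T where T: "T \<subseteq> S" "finite T" "S \<subseteq> (\<Union>c\<in>T. fst (UC c))"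
    using compactE_image[OF cS, of S "\<lambda>v. fst (UC v)"] UC by blast
  define C where "C = (\<Sum>c\<in>T. snd (UC c))"
  have onS: "\<bar>h w\<bar> \<le> C * f0 w" if wS: "w \<in> S" for w
  proof -
    obtain c where c: "c \<in> T" "w \<in> fst (UC c)" using T wS by blast
    have "\<bar>h w\<bar> \<le> snd (UC c) * f0 w" using UC[of c] c T wS by blast
    also have "\<dots> \<le> C * f0 w"
    proof (intro mult_right_mono)
      show "snd (UC c) \<le> C" unfolding C_def
        using c T UC by (intro member_le_sum) auto
    qed (use nn in auto)
    finally show ?thesis .
  qed
  have "\<bar>h v\<bar> \<le> C * f0 v" for v
  proof (cases "v = 0")
    case True
    have "h 0 = 0" using H_hom[OF h, of 0 0] by simp
    moreover have "f0 0 = 0" using H_hom[OF f0, of 0 0] by simp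
    ultimately show ?thesis using True by simp
  next
    case False
    define w where "w = (1 / norm v) *\<^sub>R v"
    have wS: "w \<in> S" unfolding S_def w_def using False by simp
    have vw: "v = norm v *\<^sub>R w" unfolding w_def using False by simp
    have "\<bar>h v\<bar> = norm v ^ 4 * \<bar>h w\<bar>" by (subst vw, simp add: H_hom[OF h] abs_mult)
    also have "\<dots> \<le> norm v ^ 4 * (C * f0 w)" using onS[OF wS] by (intro mult_left_mono) auto
    also have "\<dots> = C * f0 v" by (subst (2) vw, simp add: H_hom[OF f0])
    finally show ?thesis .
  qed
  thus ?thesis by blast
qed

lemma chart_nbhd:
  fixes h f0 :: "real^3 \<Rightarrow> real"
  assumes h: "h \<in> H 4" and f0: "f0 \<in> H 4" and inv: "invertible (A::real^3^3)" and lam: "lam \<noteq> 0"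
  and d: "\<delta> > 0" and bd: "\<forall>x y. \<bar>x\<bar> \<le> \<delta> \<longrightarrow> \<bar>y\<bar> \<le> \<delta> \<longrightarrow> \<bar>h (A *v vector [x, y, 1])\<bar> \<le> C * f0 (A *v vector [x, y, 1])"
  shows "\<exists>U. open U \<and> lam *\<^sub>R (A *v e 3) \<in> U \<and> (\<forall>w\<in>U. \<bar>h w\<bar> \<le> C * f0 w)"
proof -
  obtain Ai where Ai: "\<And>v. A *v (Ai *v v) = v" "\<And>v. Ai *v (A *v v) = v" using inv_ex[OF inv] by blast
  define U where "U = {w. \<bar>(Ai *v w)$3 - lam\<bar> < \<bar>lam\<bar>/2} \<inter> {w. \<bar>(Ai *v w)$1\<bar> < \<delta> * \<bar>lam\<bar>/2} \<inter> {w. \<bar>(Ai *v w)$2\<bar> < \<delta> * \<bar>lam\<bar>/2}"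
  have cont: "continuous_on UNIV (\<lambda>w. (Ai *v w)$i)" for i
    by (intro linear_continuous_on bounded_linear_compose[OF bounded_linear_vec_nth]) (rule matrix_vector_mul_bounded_linear)
  have oU: "open U" unfolding U_def
    by (intro open_Int open_Collect_less continuous_intros cont)
  have zU: "lam *\<^sub>R (A *v e 3) \<in> U"
  proof -
    have "Ai *v (lam *\<^sub>R (A *v e 3)) = lam *\<^sub>R e 3" by (simp add: matrix_vector_mult_scaleR Ai)
    thus ?thesis unfolding U_def using lam d by (simp add: axis_def)
  qed
  have "\<bar>h w\<bar> \<le> C * f0 w" if wU: "w \<in> U" for w
  proof -
    define u where "u = Ai *v w"
    have u3: "\<bar>u$3 - lam\<bar> < \<bar>lam\<bar>/2" and u1: "\<bar>u$1\<bar> < \<delta> * \<bar>lam\<bar>/2" and u2: "\<bar>u$2\<bar> < \<delta> * \<bar>lam\<bar>/2"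
      using wU unfolding U_def u_def by auto
    have u3b: "\<bar>u$3\<bar> > \<bar>lam\<bar>/2" using u3 by linarith
    hence u3nz: "u$3 \<noteq> 0" using lam by auto
    have u3p: "\<bar>u$3\<bar> > 0" using u3nz by simp
    define x where "x = u$1 / u$3"
    define y where "y = u$2 / u$3"
    have xb: "\<bar>x\<bar> \<le> \<delta>"
    proof -
      have "\<delta> * (\<bar>lam\<bar> / 2) \<le> \<delta> * \<bar>u$3\<bar>" using u3b d by (intro mult_left_mono) auto
      hence "\<bar>u$1\<bar> \<le> \<delta> * \<bar>u$3\<bar>" using u1 by simp
      thus ?thesis unfolding x_def using u3p by (simp add: abs_divide divide_le_eq)
    qed
    have yb: "\<bar>y\<bar> \<le> \<delta>"
    proof -
      have "\<delta> * (\<bar>lam\<bar> / 2) \<le> \<delta> * \<bar>u$3\<bar>" using u3b d by (intro mult_left_mono) auto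
      hence "\<bar>u$2\<bar> \<le> \<delta> * \<bar>u$3\<bar>" using u2 by simp
      thus ?thesis unfolding y_def using u3p by (simp add: abs_divide divide_le_eq)
    qed
    have uu: "u = u$3 *\<^sub>R vector [x, y, 1]"
      unfolding x_def y_def using u3nz by (simp add: vec_eq_iff forall_3)
    have ww: "w = u$3 *\<^sub>R (A *v vector [x, y, 1])"
      by (metis Ai(1) matrix_vector_mult_scaleR u_def uu)
    have "\<bar>h w\<bar> = (u$3)^4 * \<bar>h (A *v vector [x, y, 1])\<bar>" unfolding ww H_hom[OF h] by (simp add: abs_mult)
    also have "\<dots> \<le> (u$3)^4 * (C * f0 (A *v vector [x, y, 1]))" using bd xb yb by (intro mult_left_mono) auto
    also have "\<dots> = C * f0 w" unfolding ww H_hom[OF f0] by simp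
    finally show ?thesis .
  qed
  thus ?thesis using oU zU by blast
qed

lemma two_indep: fixes G :: "(real^3) set" assumes "dim G = 2"
  shows "\<exists>g1\<in>G. \<exists>g2\<in>G. \<forall>\<mu> \<nu>. \<mu> *\<^sub>R g1 + \<nu> *\<^sub>R g2 = 0 \<longrightarrow> \<mu> = 0 \<and> \<nu> = 0"
proof -
  obtain B where B: "B \<subseteq> G" "independent B" "card B = 2" using basis_exists[of G] assms by metis
  then obtain g1 g2 where g: "B = {g1, g2}" "g1 \<noteq> g2" by (meson card_2_iff)
  have "\<forall>\<mu> \<nu>. \<mu> *\<^sub>R g1 + \<nu> *\<^sub>R g2 = 0 \<longrightarrow> \<mu> = 0 \<and> \<nu> = 0"
  proof (intro allI impI)
    fix \<mu> \<nu> assume eq: "\<mu> *\<^sub>R g1 + \<nu> *\<^sub>R g2 = 0"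
    show "\<mu> = 0 \<and> \<nu> = 0"
    proof (rule ccontr)
      assume nz: "\<not> (\<mu> = 0 \<and> \<nu> = 0)"
      have "dependent B"
      proof (cases "\<mu> = 0")
        case False
        have m1: "\<mu> *\<^sub>R g1 = - (\<nu> *\<^sub>R g2)" using eq by (simp add: eq_neg_iff_add_eq_0)
        have "g1 = (1/\<mu>) *\<^sub>R (\<mu> *\<^sub>R g1)" using False by simp
        also have "\<dots> = (- \<nu> / \<mu>) *\<^sub>R g2" unfolding m1 by simp
        finally have "g1 \<in> span {g2}" by (metis span_base span_scale singletonI)
        moreover have "B - {g1} = {g2}" using g by auto
        ultimately show ?thesis unfolding dependent_def using g by auto
      next
        case True
        hence "\<nu> \<noteq> 0" using nz by simp
        hence "g2 = 0" using eq True by simp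
        thus ?thesis using g by (simp add: dependent_zero)
      qed
      thus False using B(2) by simp
    qed
  qed
  thus ?thesis using B(1) g by auto
qed

lemma sum2: "(\<Sum>i\<le>(2::nat). a i * x^i) = a 0 + a 1 * x + a (2::nat) * (x::real)^2"
  by (simp add: numeral_eq_Suc atMost_Suc)

lemma grad_perp_line: assumes q: "q \<in> H 2" and zp: "q p = 0" and F: "(\<lambda>v. (q v)^2) \<in> Fpl p nv"
  shows "\<forall>w. nv \<bullet> w = 0 \<longrightarrow> grad q p \<bullet> w = 0"
proof -
  obtain B c where chB: "chart_line p nv B" and rep: "local_rep 4 (\<lambda>v. (q v)^2) B c" and c20: "c 2 0 = 0"
    using F unfolding Fpl_def by blast
  obtain t where t: "t \<noteq> 0" "B *v e 3 = t *\<^sub>R p" using chart_e3[OF chart_line_chart[OF chB]] by auto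
  define a where "a = t * (grad q p \<bullet> (B *v e 1))"
  define b where "b = q (B *v e 1)"
  have Q: "q (B *v vector [x, 0, 1]) = a * x + b * x^2" for x
    unfolding H2_chart[OF q] t(2) H2_grad_scale[OF q] H2_zero_scale[OF q zp] a_def b_def
    by (simp add: algebra_simps)
  have "\<forall>x::real. (\<Sum>i\<le>4. c i 0 * x^i) = (\<Sum>i\<le>4. (if i = 2 then a^2 else if i = 3 then 2*a*b else if i = 4 then b^2 else 0) * x^i)"
  proof
    fix x :: real
    have "(\<Sum>i\<le>4. c i 0 * x^i) = (q (B *v vector [x, 0, 1]))^2"
      using rep unfolding local_rep_def by (simp add: rep_y0)
    also have "\<dots> = (\<Sum>i\<le>4. (if i = 2 then a^2 else if i = 3 then 2*a*b else if i = 4 then b^2 else 0) * x^i)"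
      unfolding Q by (simp only: sum4) (simp add: power2_eq_square power3_eq_cube power4_eq_xxxx algebra_simps)
    finally show "(\<Sum>i\<le>4. c i 0 * x^i) = \<dots>" .
  qed
  from poly_coeffs_eq[OF this, rule_format, of 2] have "c 2 0 = a^2" by simp
  hence a0: "a = 0" using c20 by simp
  hence g1: "grad q p \<bullet> (B *v e 1) = 0" unfolding a_def using t by simp
  have g3: "grad q p \<bullet> (B *v e 3) = 0" unfolding t(2) using H2_euler[OF q] zp by simp
  obtain Bi where Bi: "\<And>v. B *v (Bi *v v) = v" using inv_ex chB unfolding chart_line_def chart_def by blast
  obtain mu where mu: "mu \<noteq> 0" "\<And>u. nv \<bullet> (B *v u) = mu * u$2" using chart_line_nv[OF chB] by auto
  show ?thesis
  proof (intro allI impI)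
    fix w assume w: "nv \<bullet> w = 0"
    define u where "u = Bi *v w"
    have wu: "w = B *v u" unfolding u_def Bi ..
    have "mu * u$2 = 0" using w mu(2)[of u] unfolding wu[symmetric] by simp
    hence u2: "u$2 = 0" using mu(1) by simp
    show "grad q p \<bullet> w = 0"
      unfolding wu by (subst matvec_decomp) (simp add: inner_add_right g1 g3 u2)
  qed
qed

lemma grad_EJ: assumes q: "q \<in> H 2" and o: "ord_ge2 2 p q" shows "grad q p = 0"
proof -
  obtain B c where ch: "chart p B" and rep: "local_rep 2 q B c" and z: "c 0 0 = 0" "c 1 0 = 0" "c 0 1 = 0"
    using o unfolding ord_ge2_def by blast
  obtain t where t: "t \<noteq> 0" "B *v e 3 = t *\<^sub>R p" using chart_e3[OF ch] by auto
  have inv: "invertible B" using ch unfolding chart_def by simp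
  define g where "g = grad q (B *v e 3)"
  have "\<forall>x::real. (\<Sum>i\<le>2. c i 0 * x^i) = (\<Sum>i\<le>2. (if i = 0 then q (B *v e 3) else if i = 1 then g \<bullet> (B *v e 1) else q (B *v e 1)) * x^i)"
  proof
    fix x :: real
    have "(\<Sum>i\<le>2. c i 0 * x^i) = q (B *v vector [x, 0, 1])"
      using rep unfolding local_rep_def by (simp add: rep_y0)
    also have "\<dots> = (\<Sum>i\<le>2. (if i = 0 then q (B *v e 3) else if i = 1 then g \<bullet> (B *v e 1) else q (B *v e 1)) * x^i)"
      unfolding H2_chart[OF q] g_def by (simp only: sum2) (simp add: algebra_simps)
    finally show "(\<Sum>i\<le>2. c i 0 * x^i) = \<dots>" .
  qed
  note hx = poly_coeffs_eq[OF this, rule_format]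
  have q0: "q (B *v e 3) = 0" using hx[of 0] z by simp
  have g1: "g \<bullet> (B *v e 1) = 0" using hx[of 1] z by simp
  have "\<forall>y::real. (\<Sum>j\<le>2. c 0 j * y^j) = (\<Sum>j\<le>2. (if j = 0 then q (B *v e 3) else if j = 1 then g \<bullet> (B *v e 2) else q (B *v e 2)) * y^j)"
  proof
    fix y :: real
    have "(\<Sum>j\<le>2. c 0 j * y^j) = q (B *v vector [0, y, 1])"
      using rep unfolding local_rep_def by (simp add: rep_x0)
    also have "\<dots> = (\<Sum>j\<le>2. (if j = 0 then q (B *v e 3) else if j = 1 then g \<bullet> (B *v e 2) else q (B *v e 2)) * y^j)"
      unfolding H2_chart[OF q] g_def by (simp only: sum2) (simp add: algebra_simps)
    finally show "(\<Sum>j\<le>2. c 0 j * y^j) = \<dots>" .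
  qed
  note hy = poly_coeffs_eq[OF this, rule_format]
  have g2: "g \<bullet> (B *v e 2) = 0" using hy[of 1] z by simp
  have g3: "g \<bullet> (B *v e 3) = 0" unfolding g_def H2_euler[OF q] q0 by simp
  have "g = 0" by (rule perp_all_zero[OF inv g1 g2 g3])
  thus ?thesis unfolding g_def t(2) H2_grad_scale[OF q] using t by simp
qed

definition f0 :: "nat \<Rightarrow> (nat \<Rightarrow> real^3 \<Rightarrow> real) \<Rightarrow> real^3 \<Rightarrow> real" where
  "f0 k qs v = (\<Sum>i<k. (qs i v)^2)"

definition spanfam :: "(real^3 \<Rightarrow> real) set \<Rightarrow> nat \<Rightarrow> (nat \<Rightarrow> real^3 \<Rightarrow> real) \<Rightarrow> bool" where
  "spanfam J k qs \<longleftrightarrow> (\<forall>i<k. qs i \<in> J) \<and> (\<forall>q\<in>J. \<exists>a. \<forall>v. q v = (\<Sum>i<k. a i * qs i v))"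

lemma f0_H4: assumes "\<forall>i<k. qs i \<in> H 2" shows "f0 k qs \<in> H 4"
proof -
  have "(\<lambda>v. \<Sum>i\<in>{..<k}. (\<lambda>i v. qs i v * qs i v) i v) \<in> H 4"
  proof (rule H_sum)
    fix i assume "i \<in> {..<k}"
    hence "qs i \<in> H 2" using assms by auto
    from H_mult[OF this this] show "(\<lambda>v. qs i v * qs i v) \<in> H 4" by simp
  qed simp
  thus ?thesis unfolding f0_def[abs_def] by (simp add: power2_eq_square)
qed

lemma f0_nn: "f0 k qs v \<ge> 0" unfolding f0_def by (simp add: sum_nonneg)

lemma CS_dom: assumes "\<forall>v. q v = (\<Sum>i<k. a i * qs i v)" shows "(q v)^2 \<le> (\<Sum>i<k. (a i)^2) * f0 k qs v"
proof -
  have "q v = (\<Sum>i<k. a i * qs i v)" using assms by blast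
  thus ?thesis unfolding f0_def by (simp only:) (rule Cauchy_Schwarz_ineq_sum)
qed

lemma CS_dom_J: assumes "spanfam J k qs" "q \<in> J" shows "\<exists>C\<ge>0. \<forall>v. (q v)^2 \<le> C * f0 k qs v"
proof -
  obtain a where "\<forall>v. q v = (\<Sum>i<k. a i * qs i v)" using assms unfolding spanfam_def by blast
  thus ?thesis using CS_dom by (intro exI[of _ "\<Sum>i<k. (a i)^2"]) (auto simp: sum_nonneg)
qed

lemma f0_zero: assumes "spanfam J k qs" "f0 k qs v = 0" "q \<in> J" shows "q v = 0"
proof -
  have "\<forall>i\<in>{..<k}. (qs i v)^2 = 0" using assms(2) unfolding f0_def
    by (subst sum_nonneg_eq_0_iff[symmetric]) auto
  moreover obtain a where "\<forall>v. q v = (\<Sum>i<k. a i * qs i v)" using assms unfolding spanfam_def by blast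
  ultimately show ?thesis by simp
qed

lemma loc_s:
  assumes JH: "J \<subseteq> H 2" and sp: "spanfam J k qs" and h: "h \<in> H 4" and o: "ord_ge2 4 s h"
  and zJ: "\<forall>q\<in>J. q s = 0" and dm: "dim {grad q s | q. q \<in> J} = 2" and v: "proj_eq v s"
  shows "\<exists>U C. open U \<and> v \<in> U \<and> (\<forall>w\<in>U. \<bar>h w\<bar> \<le> C * f0 k qs w)"
proof -
  obtain A d where ch: "chart s A" and rep: "local_rep 4 h A d" and z: "d 0 0 = 0" "d 1 0 = 0" "d 0 1 = 0"
    using o unfolding ord_ge2_def by blast
  obtain g1 g2 where g: "g1 \<in> {grad q s | q. q \<in> J}" "g2 \<in> {grad q s | q. q \<in> J}"
    and ind: "\<forall>\<mu> \<nu>. \<mu> *\<^sub>R g1 + \<nu> *\<^sub>R g2 = 0 \<longrightarrow> \<mu> = 0 \<and> \<nu> = 0"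
    using two_indep[OF dm] by blast
  obtain qa qb where qa: "qa \<in> J" "g1 = grad qa s" and qb: "qb \<in> J" "g2 = grad qb s" using g by blast
  obtain c \<delta> where c: "c > 0" "\<delta> > 0" and lb: "\<forall>x y. \<bar>x\<bar> \<le> \<delta> \<longrightarrow> \<bar>y\<bar> \<le> \<delta> \<longrightarrow>
     c * (x^2 + y^2) \<le> (qa (A *v vector [x, y, 1]))^2 + (qb (A *v vector [x, y, 1]))^2"
    using LB_s[of qa qb s A] qa qb JH ch zJ ind by blast
  obtain Ca where Ca: "Ca \<ge> 0" "\<forall>v. (qa v)^2 \<le> Ca * f0 k qs v" using CS_dom_J[OF sp qa(1)] by blast
  obtain Cb where Cb: "Cb \<ge> 0" "\<forall>v. (qb v)^2 \<le> Cb * f0 k qs v" using CS_dom_J[OF sp qb(1)] by blast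
  define M where "M = (\<Sum>i\<le>4. \<Sum>j\<le>4 - i. \<bar>d i j\<bar>)"
  have M0: "M \<ge> 0" unfolding M_def by (simp add: sum_nonneg)
  define \<delta>' where "\<delta>' = min \<delta> 1"
  have d': "\<delta>' > 0" unfolding \<delta>'_def using c by simp
  have bd: "\<forall>x y. \<bar>x\<bar> \<le> \<delta>' \<longrightarrow> \<bar>y\<bar> \<le> \<delta>' \<longrightarrow> \<bar>h (A *v vector [x, y, 1])\<bar> \<le> (M / c * (Ca + Cb)) * f0 k qs (A *v vector [x, y, 1])"
  proof (intro allI impI)
    fix x y :: real assume x: "\<bar>x\<bar> \<le> \<delta>'" and y: "\<bar>y\<bar> \<le> \<delta>'"
    have x1: "\<bar>x\<bar> \<le> 1" "\<bar>x\<bar> \<le> \<delta>" and y1: "\<bar>y\<bar> \<le> 1" "\<bar>y\<bar> \<le> \<delta>" using x y unfolding \<delta>'_def by auto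
    let ?P = "A *v vector [x, y, 1]"
    have "\<bar>h ?P\<bar> \<le> M * (x^2 + y^2)" unfolding M_def by (rule rep_bound_s[OF rep z x1(1) y1(1)])
    also have "\<dots> \<le> M * (((qa ?P)^2 + (qb ?P)^2) / c)"
      using lb x1 y1 c M0 by (intro mult_left_mono) (auto simp: field_simps)
    also have "\<dots> \<le> M * ((Ca * f0 k qs ?P + Cb * f0 k qs ?P) / c)"
      using Ca Cb c M0 by (intro mult_left_mono divide_right_mono add_mono) auto
    also have "\<dots> = (M / c * (Ca + Cb)) * f0 k qs ?P" by (simp add: algebra_simps)
    finally show "\<bar>h ?P\<bar> \<le> (M / c * (Ca + Cb)) * f0 k qs ?P" .
  qed
  obtain t where t: "t \<noteq> 0" "A *v e 3 = t *\<^sub>R s" using chart_e3[OF ch] by auto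
  obtain lm where lam: "lm \<noteq> 0" "v = lm *\<^sub>R s" using v unfolding proj_eq_def by auto
  have vv: "v = (lm / t) *\<^sub>R (A *v e 3)" unfolding t(2) lam(2) using t by simp
  have "lm / t \<noteq> 0" using lam t by simp
  from chart_nbhd[OF h f0_H4 _ this d' bd] show ?thesis
    using ch JH sp unfolding chart_def spanfam_def vv by blast
qed


lemma loc_p:
  assumes JH: "J \<subseteq> H 2" and sp: "spanfam J k qs" and h: "h \<in> H 4" and hI: "h \<in> Ipl p nv"
  and zJ: "\<forall>q\<in>J. q p = 0" and c3: "\<exists>q\<in>J. grad q p \<noteq> 0"
  and FJ: "\<forall>q\<in>J. (\<lambda>v. (q v)^2) \<in> Fpl p nv"
  and c4: "Zset (EJ J p) \<inter> {a. nv \<bullet> a = 0} = {a. a \<noteq> 0 \<and> proj_eq a p}"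
  and v: "proj_eq v p"
  shows "\<exists>U C. open U \<and> v \<in> U \<and> (\<forall>w\<in>U. \<bar>h w\<bar> \<le> C * f0 k qs w)"
proof -
  obtain A d where chl: "chart_line p nv A" and rep: "local_rep 4 h A d" and
    z: "d 0 0 = 0" "d 1 0 = 0" "d 0 1 = 0" "d 2 0 = 0" "d 1 1 = 0" "d 3 0 = 0"
    using hI unfolding Ipl_def by blast
  have ch: "chart p A" using chl by (rule chart_line_chart)
  have inv: "invertible A" using ch unfolding chart_def by simp
  obtain t where t: "t \<noteq> 0" "A *v e 3 = t *\<^sub>R p" using chart_e3[OF ch] by auto
  obtain mu where mu: "\<And>u. nv \<bullet> (A *v u) = mu * u$2" using chart_line_nv[OF chl] by auto
  have nvE1: "nv \<bullet> (A *v e 1) = 0" using mu[of "e 1"] by (simp add: axis_def)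
  obtain qa where qa: "qa \<in> J" "grad qa p \<noteq> 0" using c3 by blast
  have qaH: "qa \<in> H 2" using qa JH by auto
  have ga1: "grad qa p \<bullet> (A *v e 1) = 0"
    using grad_perp_line[OF qaH zJ[rule_format, OF qa(1)] FJ[rule_format, OF qa(1)]] nvE1 by blast
  have E1nz: "A *v e 1 \<noteq> 0"
  proof
    assume "A *v e 1 = 0"
    hence "e 1 = (0::real^3)" using inv_inj[OF inv] by blast
    thus False by (simp add: axis_eq_0_iff)
  qed
  have E1np: "\<not> proj_eq (A *v e 1) p"
  proof
    assume "proj_eq (A *v e 1) p"
    then obtain \<tau> where "A *v e 1 = \<tau> *\<^sub>R p" unfolding proj_eq_def by auto
    hence "A *v e 1 = (\<tau> / t) *\<^sub>R (A *v e 3)" unfolding t(2) using t by simp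
    hence "A *v (e 1 - (\<tau> / t) *\<^sub>R e 3) = 0"
      by (simp add: matrix_vector_mult_diff_distrib matrix_vector_mult_scaleR)
    hence "e 1 - (\<tau> / t) *\<^sub>R e 3 = (0::real^3)" using inv_inj[OF inv] by blast
    hence "(e 1 - (\<tau> / t) *\<^sub>R e 3) $ 1 = (0::real)" by simp
    thus False by (simp add: axis_def)
  qed
  have "A *v e 1 \<notin> Zset (EJ J p)"
  proof
    assume "A *v e 1 \<in> Zset (EJ J p)"
    hence "A *v e 1 \<in> {a. a \<noteq> 0 \<and> proj_eq a p}" using c4 nvE1 by blast
    thus False using E1np by simp
  qed
  then obtain qb where qb: "qb \<in> EJ J p" "qb (A *v e 1) \<noteq> 0" using E1nz unfolding Zset_def by blast
  have qbJ: "qb \<in> J" and qbo: "ord_ge2 2 p qb" using qb unfolding EJ_def by auto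
  have qbH: "qb \<in> H 2" using qbJ JH by auto
  have gb0: "grad qb p = 0" by (rule grad_EJ[OF qbH qbo])
  obtain c \<delta> where c: "c > 0" "\<delta> > 0" and lb: "\<forall>x y. \<bar>x\<bar> \<le> \<delta> \<longrightarrow> \<bar>y\<bar> \<le> \<delta> \<longrightarrow>
     c * (y^2 + x^4) \<le> (qa (A *v vector [x, y, 1]))^2 + (qb (A *v vector [x, y, 1]))^2"
    using LB_p[OF qaH qbH ch zJ[rule_format, OF qa(1)] zJ[rule_format, OF qbJ] qa(2) ga1 gb0 qb(2)] by blast
  obtain Ca where Ca: "Ca \<ge> 0" "\<forall>v. (qa v)^2 \<le> Ca * f0 k qs v" using CS_dom_J[OF sp qa(1)] by blast
  obtain Cb where Cb: "Cb \<ge> 0" "\<forall>v. (qb v)^2 \<le> Cb * f0 k qs v" using CS_dom_J[OF sp qbJ] by blast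
  define M where "M = (\<Sum>i\<le>4. \<Sum>j\<le>4 - i. \<bar>d i j\<bar>)"
  have M0: "M \<ge> 0" unfolding M_def by (simp add: sum_nonneg)
  define \<delta>' where "\<delta>' = min \<delta> 1"
  have d': "\<delta>' > 0" unfolding \<delta>'_def using c by simp
  have bd: "\<forall>x y. \<bar>x\<bar> \<le> \<delta>' \<longrightarrow> \<bar>y\<bar> \<le> \<delta>' \<longrightarrow> \<bar>h (A *v vector [x, y, 1])\<bar> \<le> (M / c * (Ca + Cb)) * f0 k qs (A *v vector [x, y, 1])"
  proof (intro allI impI)
    fix x y :: real assume x: "\<bar>x\<bar> \<le> \<delta>'" and y: "\<bar>y\<bar> \<le> \<delta>'"
    have x1: "\<bar>x\<bar> \<le> 1" "\<bar>x\<bar> \<le> \<delta>" and y1: "\<bar>y\<bar> \<le> 1" "\<bar>y\<bar> \<le> \<delta>" using x y unfolding \<delta>'_def by auto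
    let ?P = "A *v vector [x, y, 1]"
    have "\<bar>h ?P\<bar> \<le> M * (y^2 + x^4)" unfolding M_def by (rule rep_bound_p[OF rep z x1(1) y1(1)])
    also have "\<dots> \<le> M * (((qa ?P)^2 + (qb ?P)^2) / c)"
      using lb x1 y1 c M0 by (intro mult_left_mono) (auto simp: field_simps)
    also have "\<dots> \<le> M * ((Ca * f0 k qs ?P + Cb * f0 k qs ?P) / c)"
      using Ca Cb c M0 by (intro mult_left_mono divide_right_mono add_mono) auto
    also have "\<dots> = (M / c * (Ca + Cb)) * f0 k qs ?P" by (simp add: algebra_simps)
    finally show "\<bar>h ?P\<bar> \<le> (M / c * (Ca + Cb)) * f0 k qs ?P" .
  qed
  obtain lm where lam: "lm \<noteq> 0" "v = lm *\<^sub>R p" using v unfolding proj_eq_def by auto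
  have vv: "v = (lm / t) *\<^sub>R (A *v e 3)" unfolding t(2) lam(2) using t by simp
  have "lm / t \<noteq> 0" using lam t by simp
  from chart_nbhd[OF h f0_H4 inv this d' bd] show ?thesis
    using JH sp unfolding spanfam_def vv by blast
qed

lemma comb_rep: assumes "\<forall>i<K. local_rep k (gs i) A (ds i)"
  shows "local_rep k (\<lambda>v. \<Sum>i<K. c i * gs i v) A (\<lambda>a b. \<Sum>i<K. c i * ds i a b)"
  unfolding local_rep_def
proof (intro allI)
  fix x y :: real
  have "(\<Sum>i<K. c i * gs i (A *v vector [x, y, 1])) = (\<Sum>i<K. c i * (\<Sum>a\<le>k. \<Sum>b\<le>k - a. ds i a b * x^a * y^b))"
    using assms unfolding local_rep_def by simp
  also have "\<dots> = (\<Sum>a\<le>k. \<Sum>b\<le>k - a. (\<Sum>i<K. c i * ds i a b) * x^a * y^b)"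
    by (simp add: sum_distrib_left sum_distrib_right mult.assoc sum.swap[of _ "{..<K}"])
  finally show "(\<Sum>i<K. c i * gs i (A *v vector [x, y, 1])) = (\<Sum>a\<le>k. \<Sum>b\<le>k - a. (\<Sum>i<K. c i * ds i a b) * x^a * y^b)" .
qed

lemma hom_zero4: assumes "h \<in> H 4" "chart s A" "local_rep 4 h A d" "d 0 0 = 0" shows "h s = 0"
proof -
  obtain t where t: "t \<noteq> 0" "A *v e 3 = t *\<^sub>R s" using chart_e3[OF assms(2)] by auto
  have "h (A *v vector [0, 0, 1]) = d 0 0" using rep4_P[OF assms(3), of 0 0] by simp
  hence "t^4 * h s = 0" using assms(4) unfolding vec001 t(2) H_hom[OF assms(1)] by simp
  thus ?thesis using t by simp
qed

definition ev :: "(real^3 \<Rightarrow> real) \<Rightarrow> (real^3) \<times> (real^3)" where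
  "ev q = (vector [q (e 1), q (e 2), q (e 3)], vector [q (e 1 + e 2), q (e 1 + e 3), q (e 2 + e 3)])"

lemma ev_inj: assumes "q \<in> H 2" "q' \<in> H 2" "ev q = ev q'" shows "q = q'"
proof -
  obtain c where c: "q = monoms 2 c" using assms(1) by (auto simp: H_def)
  obtain d where d: "q' = monoms 2 d" using assms(2) by (auto simp: H_def)
  have v: "q (e 1) = q' (e 1)" "q (e 2) = q' (e 2)" "q (e 3) = q' (e 3)"
     "q (e 1 + e 2) = q' (e 1 + e 2)" "q (e 1 + e 3) = q' (e 1 + e 3)" "q (e 2 + e 3) = q' (e 2 + e 3)"
    using assms(3) unfolding ev_def by (auto simp: vec_eq_iff forall_3)
  hence "c 2 0 = d 2 0 \<and> c 0 2 = d 0 2 \<and> c 0 0 = d 0 0 \<and> c 1 1 = d 1 1 \<and> c 1 0 = d 1 0 \<and> c 0 1 = d 0 1"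
    unfolding c d monoms2_expand by (simp add: axis_def)
  thus ?thesis unfolding c d by (intro ext) (simp add: monoms2_expand)
qed

lemma fsub_sum: fixes K :: nat assumes "fsubspace J" "\<forall>i<K. gs i \<in> J" shows "(\<lambda>v. \<Sum>i<K. a i * gs i v) \<in> J"
  using assms(2)
proof (induction K)
  case 0 thus ?case using assms(1) unfolding fsubspace_def by simp
next
  case (Suc K)
  hence IH: "(\<lambda>v. \<Sum>i<K. a i * gs i v) \<in> J" by simp
  have "(\<lambda>v. a K * gs K v) \<in> J" using Suc.prems assms(1) unfolding fsubspace_def by simp
  moreover have add: "\<forall>f\<in>J. \<forall>g\<in>J. (\<lambda>v. f v + g v) \<in> J" using assms(1) unfolding fsubspace_def by blast
  ultimately have "(\<lambda>v. (\<Sum>i<K. a i * gs i v) + a K * gs K v) \<in> J" using add[rule_format, OF IH] by simp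
  thus ?case by simp
qed

lemma ev_sum: fixes K :: nat shows "ev (\<lambda>v. \<Sum>i<K. a i * gs i v) = (\<Sum>i<K. a i *\<^sub>R ev (gs i))"
proof -
  have "fst (ev (\<lambda>v. \<Sum>i<K. a i * gs i v)) = (\<Sum>i<K. a i *\<^sub>R fst (ev (gs i)))"
    unfolding ev_def by (simp add: vec_eq_iff forall_3 sum_component)
  moreover have "snd (ev (\<lambda>v. \<Sum>i<K. a i * gs i v)) = (\<Sum>i<K. a i *\<^sub>R snd (ev (gs i)))"
    unfolding ev_def by (simp add: vec_eq_iff forall_3 sum_component)
  ultimately show ?thesis by (simp add: prod_eq_iff fst_sum snd_sum)
qed

lemma SF_exists: assumes sub: "fsubspace J" and JH: "J \<subseteq> H 2" shows "\<exists>k qs. spanfam J k qs"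
proof -
  define V where "V = ev ` J"
  obtain B where B: "B \<subseteq> V" "independent B" "V \<subseteq> span B" using basis_exists[of V] by metis
  have fB: "finite B" using B(2) by (rule finiteI_independent)
  obtain \<beta> where bij: "bij_betw \<beta> {0..<card B} B" using ex_bij_betw_nat_finite[OF fB] by blast
  have "\<forall>b\<in>B. \<exists>q\<in>J. ev q = b" using B(1) unfolding V_def by blast
  then obtain r where r: "\<And>b. b \<in> B \<Longrightarrow> r b \<in> J \<and> ev (r b) = b" by metis
  define k where "k = card B"
  define qs where "qs = (\<lambda>i. r (\<beta> i))"
  have bi: "\<beta> i \<in> B" if "i < k" for i using bij that unfolding k_def bij_betw_def by auto
  have qsJ: "\<forall>i<k. qs i \<in> J" using r bi unfolding qs_def by blast
  have "\<forall>q\<in>J. \<exists>a. \<forall>v. q v = (\<Sum>i<k. a i * qs i v)"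
  proof
    fix q assume q: "q \<in> J"
    have "ev q \<in> span B" using B(3) q unfolding V_def by blast
    then obtain u where u: "ev q = (\<Sum>b\<in>B. u b *\<^sub>R b)" using span_finite[OF fB] by auto
    define a where "a = (\<lambda>i. u (\<beta> i))"
    define q' where "q' = (\<lambda>v. \<Sum>i<k. a i * qs i v)"
    have q'J: "q' \<in> J" unfolding q'_def by (rule fsub_sum[OF sub qsJ])
    have "ev q' = (\<Sum>i<k. a i *\<^sub>R ev (qs i))" unfolding q'_def by (rule ev_sum)
    also have "\<dots> = (\<Sum>i\<in>{0..<card B}. u (\<beta> i) *\<^sub>R \<beta> i)"
      unfolding a_def qs_def k_def using r bi unfolding k_def
      by (intro sum.cong) (auto simp: atLeast0LessThan)
    also have "\<dots> = (\<Sum>b\<in>B. u b *\<^sub>R b)"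
      by (rule sum.reindex_bij_betw[OF bij, of "\<lambda>b. u b *\<^sub>R b"])
    finally have "ev q' = ev q" using u by simp
    hence "q = q'" using ev_inj[of q q'] q q'J JH by auto
    thus "\<exists>a. \<forall>v. q v = (\<Sum>i<k. a i * qs i v)" unfolding q'_def by auto
  qed
  thus ?thesis using qsJ unfolding spanfam_def by blast
qed

context
  fixes n m :: nat and s p l :: "nat \<Rightarrow> real^3" and J :: "(real^3 \<Rightarrow> real) set"
  assumes config: "configuration n s m p l"
    and subsp: "fsubspace J"
    and JsubJS: "J \<subseteq> JF (FS n s m p l)"
    and c1: "Zset J = {a. a \<noteq> 0 \<and> ((\<exists>i<n. proj_eq a (s i)) \<or> (\<exists>j<m. proj_eq a (p j)))}"
    and c2: "\<forall>i<n. dim {grad q (s i) | q. q \<in> J} = 2"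
    and c3: "\<forall>j<m. \<exists>q\<in>J. grad q (p j) \<noteq> 0"
    and c4: "\<forall>j<m. Zset (EJ J (p j)) \<inter> {a. l j \<bullet> a = 0} = {a. a \<noteq> 0 \<and> proj_eq a (p j)}"
begin

lemma JH: "J \<subseteq> H 2" using JsubJS unfolding JF_def by auto

lemma JFS: "q \<in> J \<Longrightarrow> (\<lambda>v. (q v)^2) \<in> FS n s m p l" using JsubJS unfolding JF_def by auto

lemma s_nz: "i < n \<Longrightarrow> s i \<noteq> 0" using config unfolding configuration_def by auto
lemma p_nz: "j < m \<Longrightarrow> p j \<noteq> 0" using config unfolding configuration_def by auto
lemma l_nz: "j < m \<Longrightarrow> l j \<noteq> 0" using config unfolding configuration_def by auto
lemma lp0: "j < m \<Longrightarrow> l j \<bullet> p j = 0" using config unfolding configuration_def by auto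

lemma proj_refl: "a \<noteq> 0 \<Longrightarrow> proj_eq a a" unfolding proj_eq_def by (intro exI[of _ 1]) simp

lemma zJs: "i < n \<Longrightarrow> q \<in> J \<Longrightarrow> q (s i) = 0"
proof -
  assume i: "i < n" and q: "q \<in> J"
  have "s i \<in> Zset J" unfolding c1 using i s_nz[OF i] proj_refl[OF s_nz[OF i]] by blast
  thus ?thesis using q unfolding Zset_def by auto
qed

lemma zJp: "j < m \<Longrightarrow> q \<in> J \<Longrightarrow> q (p j) = 0"
proof -
  assume j: "j < m" and q: "q \<in> J"
  have "p j \<in> Zset J" unfolding c1 using j p_nz[OF j] proj_refl[OF p_nz[OF j]] by blast
  thus ?thesis using q unfolding Zset_def by auto
qed

lemma FJp: "j < m \<Longrightarrow> q \<in> J \<Longrightarrow> (\<lambda>v. (q v)^2) \<in> Fpl (p j) (l j)"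
  using JFS unfolding FS_def by blast

lemma FS_IS: assumes g: "g \<in> FS n s m p l" shows "g \<in> IS n s m p l"
proof -
  have gP: "g \<in> H 4" "\<forall>v. g v \<ge> 0" using g unfolding FS_def P34_def by auto
  have "g \<in> Ipt (s i)" if i: "i < n" for i
  proof -
    have gs: "g (s i) = 0" using g i unfolding FS_def Fpt_def by auto
    obtain A where A: "chart (s i) A" using chart_exists[OF s_nz[OF i]] by blast
    obtain d where d: "local_rep 4 g A d" using local_rep_exists[OF gP(1)] by blast
    show ?thesis unfolding Ipt_def ord_ge2_def using gP(1) A d E1[OF gP(1) gP(2) gs A d] by blast
  qed
  moreover have "g \<in> Ipl (p j) (l j)" if j: "j < m" for j
  proof -
    have gF: "g \<in> Fpl (p j) (l j)" using g j unfolding FS_def by auto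
    then obtain B c where gp: "g (p j) = 0" and B: "chart_line (p j) (l j) B" "local_rep 4 g B c" "c 2 0 = 0"
      unfolding Fpl_def by blast
    obtain A where A: "chart_line (p j) (l j) A" using chart_line_exists[OF p_nz[OF j] l_nz[OF j] lp0[OF j]] by blast
    obtain d where d: "local_rep 4 g A d" using local_rep_exists[OF gP(1)] by blast
    show ?thesis unfolding Ipl_def using gP(1) A d Epl[OF gP(1) gP(2) gp B A d] by blast
  qed
  ultimately show ?thesis using gP unfolding IS_def by blast
qed

lemma dom_J: assumes sp: "spanfam J k qs" and h: "h \<in> IS n s m p l"
  shows "\<exists>C. \<forall>v. \<bar>h v\<bar> \<le> C * f0 k qs v"
proof -
  have hH: "h \<in> H 4" using h unfolding IS_def by auto
  have qsH: "\<forall>i<k. qs i \<in> H 2" using sp JH unfolding spanfam_def by auto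
  show ?thesis
  proof (rule dom_global[OF hH f0_H4[OF qsH]])
    show "\<forall>v. f0 k qs v \<ge> 0" using f0_nn by blast
    fix v assume v: "v \<noteq> 0" "f0 k qs v = 0"
    have "v \<in> Zset J" unfolding Zset_def using v f0_zero[OF sp] by blast
    hence "(\<exists>i<n. proj_eq v (s i)) \<or> (\<exists>j<m. proj_eq v (p j))" unfolding c1 by blast
    thus "\<exists>U C. open U \<and> v \<in> U \<and> (\<forall>w\<in>U. \<bar>h w\<bar> \<le> C * f0 k qs w)"
    proof
      assume "\<exists>i<n. proj_eq v (s i)"
      then obtain i where i: "i < n" "proj_eq v (s i)" by blast
      have o: "ord_ge2 4 (s i) h" using h i unfolding IS_def Ipt_def by auto
      show ?thesis
        by (rule loc_s[OF JH sp hH o _ _ i(2)]) (use i zJs c2 in auto)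
    next
      assume "\<exists>j<m. proj_eq v (p j)"
      then obtain j where j: "j < m" "proj_eq v (p j)" by blast
      have hI: "h \<in> Ipl (p j) (l j)" using h j unfolding IS_def by auto
      show ?thesis
        by (rule loc_p[OF JH sp hH hI _ _ _ _ j(2)]) (use j zJp c3 c4 FJp in auto)
    qed
  qed
qed


lemma rep_choice: assumes "\<forall>i<K. gs i \<in> H 4" shows "\<exists>ds. \<forall>i<K. local_rep 4 (gs i) A (ds i)"
proof -
  have "\<forall>i. \<exists>d. i < K \<longrightarrow> local_rep 4 (gs i) A d" using assms local_rep_exists by blast
  thus ?thesis by metis
qed

lemma P1: "fspan (FS n s m p l) \<subseteq> IS n s m p l"
proof
  fix g assume "g \<in> fspan (FS n s m p l)"
  hence "\<exists>(K::nat) c gs. (\<forall>i<K. gs i \<in> FS n s m p l) \<and> g = (\<lambda>v. \<Sum>i<K. c i * gs i v)"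
    unfolding fspan_def by simp
  then obtain K c gs where "(\<forall>i<(K::nat). gs i \<in> FS n s m p l) \<and> g = (\<lambda>v. \<Sum>i<K. c i * gs i v)"
    by blast
  hence gs: "\<forall>i<K. gs i \<in> FS n s m p l" and g: "g = (\<lambda>v. \<Sum>i<K. c i * gs i v)" by auto
  have gsH: "\<forall>i<K. gs i \<in> H 4" and gsN: "\<forall>i<K. \<forall>v. gs i v \<ge> 0" using gs unfolding FS_def P34_def by auto
  have gH: "g \<in> H 4" unfolding g by (intro H_sum H_scale) (use gsH in auto)
  have "g \<in> Ipt (s i)" if i: "i < n" for i
  proof -
    obtain A where A: "chart (s i) A" using chart_exists[OF s_nz[OF i]] by blast
    obtain ds where ds: "\<forall>idx<K. local_rep 4 (gs idx) A (ds idx)" using rep_choice[OF gsH] by blast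
    have z: "ds idx 0 0 = 0 \<and> ds idx 1 0 = 0 \<and> ds idx 0 1 = 0" if idx: "idx < K" for idx
    proof -
      have "gs idx (s i) = 0" using gs idx i unfolding FS_def Fpt_def by auto
      thus ?thesis using E1[of "gs idx" "s i" A "ds idx"] gsH gsN A ds idx by auto
    qed
    have r: "local_rep 4 g A (\<lambda>a b. \<Sum>idx<K. c idx * ds idx a b)" unfolding g by (rule comb_rep[OF ds])
    have sz: "(\<Sum>idx<K. c idx * ds idx a b) = 0" if "\<forall>idx<K. ds idx a b = 0" for a b
      using that by (intro sum.neutral) auto
    have "(\<lambda>a b. \<Sum>idx<K. c idx * ds idx a b) 0 0 = 0 \<and> (\<lambda>a b. \<Sum>idx<K. c idx * ds idx a b) 1 0 = 0
       \<and> (\<lambda>a b. \<Sum>idx<K. c idx * ds idx a b) 0 1 = 0"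
      using sz z by simp
    thus ?thesis unfolding Ipt_def ord_ge2_def using gH A r by blast
  qed
  moreover have "g \<in> Ipl (p j) (l j)" if j: "j < m" for j
  proof -
    obtain A where A: "chart_line (p j) (l j) A" using chart_line_exists[OF p_nz[OF j] l_nz[OF j] lp0[OF j]] by blast
    obtain ds where ds: "\<forall>idx<K. local_rep 4 (gs idx) A (ds idx)" using rep_choice[OF gsH] by blast
    have z: "ds idx 0 0 = 0 \<and> ds idx 1 0 = 0 \<and> ds idx 0 1 = 0 \<and> ds idx 2 0 = 0 \<and> ds idx 1 1 = 0 \<and> ds idx 3 0 = 0"
      if idx: "idx < K" for idx
    proof -
      have "gs idx \<in> Fpl (p j) (l j)" using gs idx j unfolding FS_def by auto
      then obtain B cc where gp: "gs idx (p j) = 0" and B: "chart_line (p j) (l j) B" "local_rep 4 (gs idx) B cc" "cc 2 0 = 0"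
        unfolding Fpl_def by blast
      show ?thesis using Epl[OF _ _ gp B A] gsH gsN ds idx by auto
    qed
    have r: "local_rep 4 g A (\<lambda>a b. \<Sum>idx<K. c idx * ds idx a b)" unfolding g by (rule comb_rep[OF ds])
    have sz: "(\<Sum>idx<K. c idx * ds idx a b) = 0" if "\<forall>idx<K. ds idx a b = 0" for a b
      using that by (intro sum.neutral) auto
    let ?c = "\<lambda>a b. \<Sum>idx<K. c idx * ds idx a b"
    have "?c 0 0 = 0 \<and> ?c 1 0 = 0 \<and> ?c 0 1 = 0 \<and> ?c 2 0 = 0 \<and> ?c 1 1 = 0 \<and> ?c 3 0 = 0"
      using sz z by simp
    thus ?thesis unfolding Ipl_def using gH A r by blast
  qed
  ultimately show "g \<in> IS n s m p l" unfolding IS_def using gH by blast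
qed

lemma fline: assumes j: "j < m" and q: "q \<in> J" and A: "chart_line (p j) (l j) A"
  shows "q (A *v vector [x, 0, 1]) = q (A *v e 1) * x^2"
proof -
  have qH: "q \<in> H 2" using q JH by auto
  obtain t where t: "t \<noteq> 0" "A *v e 3 = t *\<^sub>R p j" using chart_e3[OF chart_line_chart[OF A]] by auto
  obtain mu where mu: "\<And>u. l j \<bullet> (A *v u) = mu * u$2" using chart_line_nv[OF A] by auto
  have "l j \<bullet> (A *v e 1) = 0" using mu[of "e 1"] by (simp add: axis_def)
  hence g1: "grad q (p j) \<bullet> (A *v e 1) = 0"
    using grad_perp_line[OF qH zJp[OF j q] FJp[OF j q]] by blast
  show ?thesis unfolding H2_chart[OF qH] t(2) H2_grad_scale[OF qH] H2_zero_scale[OF qH zJp[OF j q]]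
    using g1 by simp
qed

lemma f0_line: assumes sp: "spanfam J k qs" and j: "j < m" and A: "chart_line (p j) (l j) A"
  shows "f0 k qs (A *v vector [x, 0, 1]) = (\<Sum>i<k. (qs i (A *v e 1))^2) * x^4"
proof -
  have "f0 k qs (A *v vector [x, 0, 1]) = (\<Sum>i<k. (qs i (A *v e 1) * x^2)^2)"
    unfolding f0_def using fline[OF j _ A] sp unfolding spanfam_def by (intro sum.cong) auto
  also have "\<dots> = (\<Sum>i<k. (qs i (A *v e 1))^2) * x^4"
    by (simp add: sum_distrib_right power_mult_distrib power_mult[symmetric])
  finally show ?thesis .
qed

lemma f0_coeffs: assumes sp: "spanfam J k qs" and j: "j < m" and A: "chart_line (p j) (l j) A"
  and rep: "local_rep 4 (f0 k qs) A d"
  shows "d 2 0 = 0"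
  using quartic_coeffs[OF rep] f0_line[OF sp j A] by blast

lemma f0_zero_pts: assumes sp: "spanfam J k qs"
  shows "\<forall>i<n. f0 k qs (s i) = 0" "\<forall>j<m. f0 k qs (p j) = 0"
proof -
  have qsJ: "\<forall>i<k. qs i \<in> J" using sp unfolding spanfam_def by auto
  show "\<forall>i<n. f0 k qs (s i) = 0" unfolding f0_def
    by (intro allI impI sum.neutral ballI) (use qsJ zJs in auto)
  show "\<forall>j<m. f0 k qs (p j) = 0" unfolding f0_def
    by (intro allI impI sum.neutral ballI) (use qsJ zJp in auto)
qed

lemma f0_FS: assumes sp: "spanfam J k qs" shows "f0 k qs \<in> FS n s m p l"
proof -
  have qsH: "\<forall>i<k. qs i \<in> H 2" using sp JH unfolding spanfam_def by auto
  have P: "f0 k qs \<in> P34" unfolding P34_def using f0_H4[OF qsH] f0_nn by auto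
  have "f0 k qs \<in> Fpl (p j) (l j)" if j: "j < m" for j
  proof -
    obtain A where A: "chart_line (p j) (l j) A" using chart_line_exists[OF p_nz[OF j] l_nz[OF j] lp0[OF j]] by blast
    obtain d where d: "local_rep 4 (f0 k qs) A d" using local_rep_exists[OF f0_H4[OF qsH]] by blast
    show ?thesis unfolding Fpl_def using P f0_zero_pts[OF sp] j A d f0_coeffs[OF sp j A d] by blast
  qed
  thus ?thesis unfolding FS_def Fpt_def using P f0_zero_pts[OF sp] by auto
qed

lemma P2: "IS n s m p l \<subseteq> fspan (FS n s m p l)"
proof
  fix h assume h: "h \<in> IS n s m p l"
  have hH: "h \<in> H 4" using h unfolding IS_def by auto
  obtain k qs where sp: "spanfam J k qs" using SF_exists[OF subsp JH] by blast
  have qsH: "\<forall>i<k. qs i \<in> H 2" using sp JH unfolding spanfam_def by auto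
  define f where "f = f0 k qs"
  have fH: "f \<in> H 4" unfolding f_def by (rule f0_H4[OF qsH])
  obtain C where C: "\<forall>v. \<bar>h v\<bar> \<le> C * f v" using dom_J[OF sp h] unfolding f_def by blast
  define C' where "C' = max C 0"
  define g where "g = (\<lambda>v. h v + C' * f v)"
  have gH: "g \<in> H 4" unfolding g_def by (intro H_add H_scale hH fH)
  have gN: "\<forall>v. g v \<ge> 0"
  proof
    fix v
    have "C * f v \<le> C' * f v" unfolding C'_def using f0_nn[of k qs v] unfolding f_def by (intro mult_right_mono) auto
    thus "g v \<ge> 0" unfolding g_def using C[rule_format, of v] by linarith
  qed
  have gP: "g \<in> P34" unfolding P34_def using gH gN by auto
  have gs: "g (s i) = 0" if i: "i < n" for i
  proof -
    obtain A d where A: "chart (s i) A" "local_rep 4 h A d" "d 0 0 = 0"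
      using h i unfolding IS_def Ipt_def ord_ge2_def by blast
    show ?thesis unfolding g_def f_def using hom_zero4[OF hH A] f0_zero_pts[OF sp] i by simp
  qed
  have gpl: "g \<in> Fpl (p j) (l j)" if j: "j < m" for j
  proof -
    obtain A d where A: "chart_line (p j) (l j) A" "local_rep 4 h A d"
      and z: "d 0 0 = 0" "d 2 0 = 0"
      using h j unfolding IS_def Ipl_def by blast
    have gp: "g (p j) = 0" unfolding g_def f_def
      using hom_zero4[OF hH chart_line_chart[OF A(1)] A(2) z(1)] f0_zero_pts[OF sp] j by simp
    obtain df where df: "local_rep 4 f A df" using local_rep_exists[OF fH] by blast
    have df20: "df 2 0 = 0" using f0_coeffs[OF sp j A(1)] df unfolding f_def by blast
    have "local_rep 4 g A (\<lambda>a b. d a b + C' * df a b)"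
      using A(2) df unfolding local_rep_def g_def by (simp add: sum.distrib sum_distrib_left algebra_simps)
    moreover have "(\<lambda>a b. d a b + C' * df a b) 2 0 = 0" using z(2) df20 by simp
    ultimately show ?thesis unfolding Fpl_def using gP gp A(1) by blast
  qed
  have gFS: "g \<in> FS n s m p l" unfolding FS_def Fpt_def using gP gs gpl by auto
  have fFS: "f \<in> FS n s m p l" unfolding f_def by (rule f0_FS[OF sp])
  have "h = (\<lambda>v. \<Sum>i<(2::nat). (if i = 0 then 1 else - C') * (if i = 0 then g else f) v)"
    by (intro ext) (simp add: g_def numeral_2_eq_2)
  moreover have "\<forall>i<(2::nat). (if i = 0 then g else f) \<in> FS n s m p l" using gFS fFS by auto
  ultimately show "h \<in> fspan (FS n s m p l)" unfolding fspan_def mem_Collect_eq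
    by (intro exI[of _ "2::nat"] exI[of _ "\<lambda>i. if i = 0 then 1 else - C'"] exI[of _ "\<lambda>i. if i = 0 then g else f"]) simp
qed

lemma P3: assumes fb: "fbasis J k qs" shows "inner_form (\<lambda>v. \<Sum>i<k. (qs i v)^2) (FS n s m p l)"
proof -
  have sp: "spanfam J k qs" using fb unfolding fbasis_def spanfam_def by auto
  have qsH: "\<forall>i<k. qs i \<in> H 2" using sp JH unfolding spanfam_def by auto
  define f where "f = f0 k qs"
  have feq: "(\<lambda>v. \<Sum>i<k. (qs i v)^2) = f" unfolding f_def f0_def ..
  have fH: "f \<in> H 4" unfolding f_def by (rule f0_H4[OF qsH])
  have fN: "\<forall>v. f v \<ge> 0" unfolding f_def using f0_nn by blast
  have fP: "f \<in> P34" unfolding P34_def using fH fN by auto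
  have "Fof f = FS n s m p l"
  proof
    show "Fof f \<subseteq> FS n s m p l"
    proof
      fix g assume "g \<in> Fof f"
      then obtain \<epsilon> where gP: "g \<in> P34" and ep: "\<epsilon> > 0" and fg: "(\<lambda>v. f v - \<epsilon> * g v) \<in> P34"
        unfolding Fof_def by blast
      have gH: "g \<in> H 4" and gN: "\<forall>v. g v \<ge> 0" using gP unfolding P34_def by auto
      have fgN: "\<forall>v. f v - \<epsilon> * g v \<ge> 0" using fg unfolding P34_def by auto
      have gz: "g v = 0" if "f v = 0" for v
      proof -
        have "\<epsilon> * g v \<le> 0" using fgN[rule_format, of v] that by simp
        hence "g v \<le> 0" using ep by (simp add: mult_le_0_iff)
        thus ?thesis using gN by (simp add: order_antisym)
      qed
      have gs: "g (s i) = 0" if "i < n" for i using gz f0_zero_pts[OF sp] that unfolding f_def by blast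
      have gpl: "g \<in> Fpl (p j) (l j)" if j: "j < m" for j
      proof -
        have gp: "g (p j) = 0" using gz f0_zero_pts[OF sp] j unfolding f_def by blast
        obtain A where A: "chart_line (p j) (l j) A" using chart_line_exists[OF p_nz[OF j] l_nz[OF j] lp0[OF j]] by blast
        obtain d where d: "local_rep 4 g A d" using local_rep_exists[OF gH] by blast
        have z: "d 0 0 = 0" "d 1 0 = 0" using E1[OF gH gN gp chart_line_chart[OF A] d] by auto
        define \<kappa> where "\<kappa> = (\<Sum>i<k. (qs i (A *v e 1))^2)"
        have Pg: "g (A *v vector [x, 0, 1]) = d 2 0 * x^2 + d 3 0 * x^3 + d 4 0 * x^4" for x
          unfolding rep4_P[OF d] z by simp
        have Pf: "f (A *v vector [x, 0, 1]) = \<kappa> * x^4" for x unfolding f_def \<kappa>_def by (rule f0_line[OF sp j A])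
        have up: "(\<lambda>x. \<kappa> / \<epsilon> * x^2 - (d 2 0 + d 3 0 * x + d 4 0 * x^2)) 0 \<ge> 0"
        proof (rule cont_punct_nonneg[where \<delta>=1])
          show "isCont (\<lambda>x. \<kappa> / \<epsilon> * x^2 - (d 2 0 + d 3 0 * x + d 4 0 * x^2)) 0" by (intro continuous_intros)
          fix x :: real assume x: "x \<noteq> 0"
          have "\<epsilon> * g (A *v vector [x, 0, 1]) \<le> f (A *v vector [x, 0, 1])" using fgN by auto
          hence "\<epsilon> * (x^2 * (d 2 0 + d 3 0 * x + d 4 0 * x^2)) \<le> \<kappa> * x^4"
            unfolding Pg Pf by (simp add: algebra_simps power2_eq_square power3_eq_cube power4_eq_xxxx)
          hence "x^2 * (d 2 0 + d 3 0 * x + d 4 0 * x^2) \<le> \<kappa> * x^4 / \<epsilon>"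
            using ep by (simp add: pos_le_divide_eq mult.commute)
          also have "\<dots> = x^2 * (\<kappa> / \<epsilon> * x^2)" by (simp add: power4_eq_xxxx power2_eq_square)
          finally have "x^2 * (d 2 0 + d 3 0 * x + d 4 0 * x^2) \<le> x^2 * (\<kappa> / \<epsilon> * x^2)" .
          moreover have "x^2 > 0" using x by simp
          ultimately have "d 2 0 + d 3 0 * x + d 4 0 * x^2 \<le> \<kappa> / \<epsilon> * x^2"
            using mult_le_cancel_left_pos by blast
          thus "(\<lambda>x. \<kappa> / \<epsilon> * x^2 - (d 2 0 + d 3 0 * x + d 4 0 * x^2)) x \<ge> 0" by simp
        qed simp
        have lo: "(\<lambda>x. d 2 0 + d 3 0 * x + d 4 0 * x^2) 0 \<ge> 0"
        proof (rule cont_punct_nonneg[where \<delta>=1])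
          show "isCont (\<lambda>x. d 2 0 + d 3 0 * x + d 4 0 * x^2) 0" by (intro continuous_intros)
          fix x :: real assume x: "x \<noteq> 0"
          have "0 \<le> g (A *v vector [x, 0, 1])" using gN by auto
          hence "0 \<le> x^2 * (d 2 0 + d 3 0 * x + d 4 0 * x^2)"
            unfolding Pg by (simp add: algebra_simps power2_eq_square power3_eq_cube power4_eq_xxxx)
          thus "(\<lambda>x. d 2 0 + d 3 0 * x + d 4 0 * x^2) x \<ge> 0" using x by (simp add: zero_le_mult_iff)
        qed simp
        have "d 2 0 = 0" using up lo by simp
        thus ?thesis unfolding Fpl_def using gP gp A d by blast
      qed
      show "g \<in> FS n s m p l" unfolding FS_def Fpt_def using gP gs gpl by auto
    qed
  next
    show "FS n s m p l \<subseteq> Fof f"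
    proof
      fix g assume g: "g \<in> FS n s m p l"
      have gP: "g \<in> P34" using g unfolding FS_def by auto
      have gH: "g \<in> H 4" and gN: "\<forall>v. g v \<ge> 0" using gP unfolding P34_def by auto
      obtain C where C: "\<forall>v. \<bar>g v\<bar> \<le> C * f0 k qs v" using dom_J[OF sp FS_IS[OF g]] by blast
      define \<epsilon> where "\<epsilon> = 1 / (max C 0 + 1)"
      have ep: "\<epsilon> > 0" unfolding \<epsilon>_def by (simp add: add_nonneg_pos)
      have "\<forall>v. f v - \<epsilon> * g v \<ge> 0"
      proof
        fix v
        have "g v \<le> max C 0 * f v" using C[rule_format, of v] fN[rule_format, of v] unfolding f_def
          by (smt (verit) mult_right_mono max.cobounded1)
        also have "\<dots> \<le> (max C 0 + 1) * f v" using fN by (intro mult_right_mono) auto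
        finally have "\<epsilon> * g v \<le> \<epsilon> * ((max C 0 + 1) * f v)" using ep by (intro mult_left_mono) auto
        also have "\<dots> = f v" unfolding \<epsilon>_def by (simp add: add_nonneg_pos field_simps)
        finally show "f v - \<epsilon> * g v \<ge> 0" by simp
      qed
      moreover have "(\<lambda>v. f v - \<epsilon> * g v) \<in> H 4"
        using H_add[OF fH H_scale[OF gH, of "-\<epsilon>"]] by simp
      ultimately have "(\<lambda>v. f v - \<epsilon> * g v) \<in> P34" unfolding P34_def by auto
      thus "g \<in> Fof f" unfolding Fof_def using gP ep by blast
    qed
  qed
  thus ?thesis unfolding inner_form_def feq using fP by simp
qed

lemma main: "fspan (FS n s m p l) = IS n s m p l
    \<and> (\<forall>k qs. fbasis J k qs \<longrightarrow> inner_form (\<lambda>v. \<Sum>i<k. (qs i v)^2) (FS n s m p l))"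
  using P1 P2 P3 by blast

end

theorem mainTheorem5:
  fixes n m :: nat and s p l :: "nat \<Rightarrow> real^3" and J :: "(real^3 \<Rightarrow> real) set"
  assumes config: "configuration n s m p l"
    and subsp: "fsubspace J"
    and JsubJS: "J \<subseteq> JF (FS n s m p l)"
    and c1: "Zset J = {a. a \<noteq> 0 \<and> ((\<exists>i<n. proj_eq a (s i)) \<or> (\<exists>j<m. proj_eq a (p j)))}"
    and c2: "\<forall>i<n. dim {grad q (s i) | q. q \<in> J} = 2"
    and c3: "\<forall>j<m. \<exists>q\<in>J. grad q (p j) \<noteq> 0"
    and c4: "\<forall>j<m. Zset (EJ J (p j)) \<inter> {a. l j \<bullet> a = 0} = {a. a \<noteq> 0 \<and> proj_eq a (p j)}"
  shows "fspan (FS n s m p l) = IS n s m p l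
    \<and> (\<forall>k qs. fbasis J k qs \<longrightarrow> inner_form (\<lambda>v. \<Sum>i<k. (qs i v)^2) (FS n s m p l))"
  by (rule main[OF assms])

end
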